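(* Let $(Z_n)_{n\ge0}$ be a Galton--Watson process with $Z_0=1$ and offspring distribution $F$ on $\{0,1,2,\dots\}$ with mean $m:=\mathbb E\xi>1$, and let $W_n:=Z_n/m^n$. Assume $\mathbb E\xi^2<\infty$, $F$ is dominated varying, i.e. $\sup_x\overline F(x/2)/\overline F(x)<\infty$, and $F$ is $x^\gamma$-insensitive for some $\gamma>1/2$. Then for every fixed $n\ge1$, $$\Pr\{W_n>x\}\sim\sum_{i=0}^{n-1}m^i\overline F(m^{i+1}x)\quad\text{as }x\to\infty.$$
   Context: The process is defined by $Z_{n+1}=\sum_{i=1}^{Z_n}\xi_i^{(n)}$, where $\xi_i^{(n)}$, $i\ge1$, $n\ge0$, are i.i.d. copies of a random variable $\xi$ with distribution $F$ on $\{0,1,2,\dots\}$; $\overline F(x):=\Pr\{\xi>x\}$ for real $x$. $f\sim g$ means $f/g\to1$. $F$ is $x^\gamma$-insensitive if $\overline F(x+x^\gamma)\sim\overline F(x)$ as $x\to\infty$. *)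

theory Defs
  imports "HOL-Probability.Probability" "HOL-Library.Landau_Symbols"
begin

primrec conv_pow :: "nat pmf \<Rightarrow> nat \<Rightarrow> nat pmf" where
  "conv_pow F 0 = return_pmf 0"
| "conv_pow F (Suc k) = bind_pmf F (\<lambda>a. map_pmf (\<lambda>b. a + b) (conv_pow F k))"

text \<open>Law of Z_n of the Galton--Watson process with Z_0 = 1 and offspring law F:
  Z_(n+1) is the sum of Z_n i.i.d. copies of xi, independent of Z_n.\<close>
primrec gw :: "nat pmf \<Rightarrow> nat \<Rightarrow> nat pmf" where
  "gw F 0 = return_pmf 1"
| "gw F (Suc n) = bind_pmf (gw F n) (conv_pow F)"

definition tail :: "nat pmf \<Rightarrow> real \<Rightarrow> real" where
  "tail F x = measure_pmf.prob F {k. real k > x}"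

definition offspring_mean :: "nat pmf \<Rightarrow> real" where
  "offspring_mean F = measure_pmf.expectation F real"

end

theory Submission
  imports Defs
begin

lemma prob_bind_pmf:
  "measure_pmf.prob (bind_pmf M N) A = measure_pmf.expectation M (\<lambda>x. measure_pmf.prob (N x) A)"
proof -
  have int: "integrable (measure_pmf M) (\<lambda>x. measure_pmf.prob (N x) A)"
    by (rule measure_pmf.integrable_const_bound[where B=1]) auto
  have "emeasure (measure_pmf (bind_pmf M N)) A = (\<integral>\<^sup>+x. ennreal (measure_pmf.prob (N x) A) \<partial>M)"
    by (subst emeasure_bind_pmf) (simp add: measure_pmf.emeasure_eq_measure)
  also have "\<dots> = ennreal (measure_pmf.expectation M (\<lambda>x. measure_pmf.prob (N x) A))"
    by (rule nn_integral_eq_integral[OF int]) auto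
  finally show ?thesis
    by (simp add: measure_pmf.emeasure_eq_measure integral_nonneg_AE)
qed

definition qq :: "nat pmf \<Rightarrow> nat \<Rightarrow> real \<Rightarrow> real" where
  "qq F k t = measure_pmf.prob (conv_pow F k) {j. real j > t}"

lemma qq_0: "qq F 0 t = (if t < 0 then 1 else 0)"
  by (simp add: qq_def)

lemma qq_Suc: "qq F (Suc k) t = measure_pmf.expectation F (\<lambda>a. qq F k (t - real a))"
  unfolding qq_def conv_pow.simps prob_bind_pmf
  by (simp add: algebra_simps vimage_def)


lemma powr_at_top: "(p::real) > 0 \<Longrightarrow> filterlim (\<lambda>x. x powr p) at_top at_top"
proof (subst filterlim_cong[OF refl refl])
  assume p: "p > 0"
  show "LIM x at_top. exp (p * ln x) :> at_top"
    by (rule filterlim_compose[OF exp_at_top filterlim_tendsto_pos_mult_at_top[OF tendsto_const]])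
       (simp_all add: ln_at_top p)
  show "eventually (\<lambda>x. x powr p = exp (p * ln x)) at_top"
    using eventually_gt_at_top[of 0] by eventually_elim (simp add: powr_def)
qed

lemma ev_powr_le:
  assumes "a < b" "(c::real) > 0"
  shows "eventually (\<lambda>x::real. x powr a \<le> c * x powr b) at_top"
proof -
  have "((\<lambda>x. x powr (a - b)) \<longlongrightarrow> 0) at_top"
    using assms by (intro tendsto_neg_powr filterlim_ident) auto
  then have "eventually (\<lambda>x. x powr (a - b) < c) at_top"
    using assms(2) by (simp add: order_tendsto_iff)
  then show ?thesis using eventually_gt_at_top[of 0]
  proof eventually_elim
    case (elim x)
    have "x powr a = x powr (a - b) * x powr b" by (simp add: powr_add[symmetric])
    also have "\<dots> \<le> c * x powr b" using elim by (intro mult_right_mono) auto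
    finally show ?case .
  qed
qed

locale gwp =
  fixes F :: "nat pmf" and \<gamma> :: real
  assumes mean_gt1: "offspring_mean F > 1"
    and second_moment: "integrable (measure_pmf F) (\<lambda>k. (real k)^2)"
    and dominated: "\<exists>C. \<forall>x. tail F (x / 2) \<le> C * tail F x"
    and gamma: "\<gamma> > 1/2"
    and insensitive: "(\<lambda>x. tail F (x + x powr \<gamma>)) \<sim>[at_top] tail F"
begin

abbreviation T where "T \<equiv> tail F"
abbreviation m where "m \<equiv> offspring_mean F"
definition s2 where "s2 = measure_pmf.expectation F (\<lambda>k. (real k)^2)"

lemma real_le_sq: "real (k::nat) \<le> (real k)^2"
  by (metis of_nat_le_iff of_nat_mult le_square power2_eq_square)

lemma real_le_sq': "real (k::nat) \<le> real k * real k"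
  using real_le_sq[of k] by (simp add: power2_eq_square)

lemma int_real: "integrable (measure_pmf F) real"
  by (rule Bochner_Integration.integrable_bound[OF second_moment]) (auto intro!: AE_pmfI simp: real_le_sq' power2_eq_square)

lemma m_def': "m = measure_pmf.expectation F real"
  by (simp add: offspring_mean_def)

lemma m_pos: "m > 0" using mean_gt1 by simp

lemma T_nonneg: "T x \<ge> 0" by (simp add: tail_def)
lemma T_le1: "T x \<le> 1" by (simp add: tail_def)
lemma T_mono: "x \<le> y \<Longrightarrow> T y \<le> T x"
  unfolding tail_def by (intro measure_pmf.finite_measure_mono) auto
lemma T_neg: "x < 0 \<Longrightarrow> T x = 1"
proof -
  assume "x < 0"
  then have "{k. real k > x} = UNIV" by auto
  then show ?thesis by (simp add: tail_def)
qed

lemma T_markov: "x > 0 \<Longrightarrow> T x \<le> m / x"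
proof -
  assume x: "x > 0"
  have "T x \<le> measure_pmf.prob F {k \<in> space (measure_pmf F). real k \<ge> x}"
    unfolding tail_def by (intro measure_pmf.finite_measure_mono) auto
  also have "\<dots> \<le> measure_pmf.expectation F real / x"
    by (rule integral_Markov_inequality_measure[OF int_real]) (use x in auto)
  finally show ?thesis by (simp add: m_def')
qed

lemma T_markov2: "x > 0 \<Longrightarrow> T x \<le> s2 / x^2"
proof -
  assume x: "x > 0"
  have "T x \<le> measure_pmf.prob F {k \<in> space (measure_pmf F). (real k)^2 \<ge> x^2}"
    unfolding tail_def using x by (intro measure_pmf.finite_measure_mono) (auto intro: power_mono)
  also have "\<dots> \<le> measure_pmf.expectation F (\<lambda>k. (real k)^2) / x^2"
    by (rule integral_Markov_inequality_measure[OF second_moment]) (use x in auto)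
  finally show ?thesis by (simp add: s2_def)
qed

lemma s2_nonneg: "s2 \<ge> 0" unfolding s2_def by (rule integral_nonneg_AE) auto

lemma T_tendsto0: "(T \<longlongrightarrow> 0) at_top"
proof -
  have "((\<lambda>x. m / x) \<longlongrightarrow> 0) at_top" by (intro tendsto_divide_0[OF tendsto_const] filterlim_at_top_imp_at_infinity filterlim_ident)
  moreover have "eventually (\<lambda>x. norm (T x) \<le> m / x) at_top"
    using eventually_gt_at_top[of 0] by eventually_elim (simp add: T_nonneg T_markov)
  ultimately show ?thesis by (rule Lim_null_comparison[rotated])
qed

end

context gwp begin

lemma T_pos: "T x > 0"
proof -
  have T12: "T (1/2) > 0"
  proof (rule ccontr)
    assume "\<not> T (1/2) > 0"
    then have z: "T (1/2) = 0" using T_nonneg[of "1/2"] by linarith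
    have "k = 0" if "k \<in> set_pmf F" for k
    proof (rule ccontr)
      assume "k \<noteq> 0"
      then have "pmf F k \<le> T (1/2)"
        unfolding tail_def measure_pmf_single[symmetric]
        by (intro measure_pmf.finite_measure_mono) auto
      with z that show False by (simp add: set_pmf_eq pmf_nonneg)
    qed
    then have "measure_pmf.expectation F real = measure_pmf.expectation F (\<lambda>_. 0)"
      by (intro integral_cong_AE) (auto intro!: AE_pmfI)
    then show False using m_pos by (simp add: m_def')
  qed
  obtain C where C: "\<And>x. T (x/2) \<le> C * T x" using dominated by auto
  show ?thesis
  proof (rule ccontr)
    assume "\<not> T x > 0"
    then have z: "T x = 0" using T_nonneg[of x] by linarith
    have zj: "T (x / 2^j) = 0" for j
    proof (induction j)
      case 0 then show ?case using z by simp
    next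
      case (Suc j)
      have "T (x / 2^Suc j) \<le> C * T (x / 2^j)" using C[of "x / 2^j"] by (simp add: field_simps)
      then show ?case using Suc T_nonneg[of "x / 2^Suc j"] by simp
    qed
    obtain j where "\<bar>x\<bar> * 2 < 2^j" using real_arch_pow[of 2 "\<bar>x\<bar> * 2"] by auto
    then have "x / 2^j < 1/2" by (simp add: field_simps)
    then have "T (1/2) \<le> T (x / 2^j)" by (intro T_mono) simp
    with zj T12 show False by simp
  qed
qed

definition CC where "CC = max 1 (SOME C. \<forall>x. T (x / 2) \<le> C * T x)"

lemma CC_ge1: "CC \<ge> 1" by (simp add: CC_def)

lemma CC: "T (x / 2) \<le> CC * T x"
proof -
  have "\<forall>x. T (x / 2) \<le> (SOME C. \<forall>x. T (x / 2) \<le> C * T x) * T x"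
    using someI_ex[OF dominated] .
  then have "T (x/2) \<le> (SOME C. \<forall>x. T (x / 2) \<le> C * T x) * T x" by blast
  also have "\<dots> \<le> CC * T x" unfolding CC_def by (intro mult_right_mono) (auto simp: T_nonneg)
  finally show ?thesis .
qed

lemma CC_pow: "T (x / 2^j) \<le> CC^j * T x"
proof (induction j)
  case 0 then show ?case by simp
next
  case (Suc j)
  have "T (x / 2^Suc j) = T ((x / 2^j) / 2)" by (simp add: field_simps)
  also have "\<dots> \<le> CC * T (x / 2^j)" by (rule CC)
  also have "\<dots> \<le> CC * (CC^j * T x)" using Suc CC_ge1 by (intro mult_left_mono) auto
  finally show ?case by simp
qed

definition pp where "pp = log 2 CC"

lemma pp_nonneg: "pp \<ge> 0" using CC_ge1 by (simp add: pp_def)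

lemma T_poly_lower: "x \<ge> 1 \<Longrightarrow> T x \<ge> (T 1 / CC) * x powr (- pp)"
proof -
  assume x: "x \<ge> 1"
  define j where "j = nat \<lceil>log 2 x\<rceil>"
  have lx: "log 2 x \<ge> 0" using x by simp
  have j1: "real j \<ge> log 2 x" unfolding j_def using lx by linarith
  have j2: "real j \<le> log 2 x + 1" unfolding j_def using lx by linarith
  have "x \<le> 2 powr real j" using j1 x by (metis less_log_iff not_le one_less_numeral_iff semiring_norm(76) zero_less_one order.strict_trans1)
  then have x2: "x \<le> 2^j" by (simp add: powr_realpow)
  have "T 1 = T ((2^j) / 2^j)" by simp
  also have "\<dots> \<le> CC^j * T (2^j)" by (rule CC_pow)
  also have "\<dots> \<le> CC^j * T x" using x2 CC_ge1 by (intro mult_left_mono T_mono) auto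
  finally have a: "T 1 \<le> CC^j * T x" .
  have "CC^j = CC powr real j" using CC_ge1 by (simp add: powr_realpow)
  also have "\<dots> \<le> CC powr (log 2 x + 1)" using CC_ge1 j2 by (intro powr_mono) auto
  also have "\<dots> = CC * x powr pp"
  proof -
    have "CC powr (log 2 x) = x powr pp" unfolding pp_def using x CC_ge1
      by (simp add: powr_def log_def field_simps)
    then show ?thesis using CC_ge1 by (simp add: powr_add)
  qed
  finally have b: "CC^j \<le> CC * x powr pp" .
  have "T 1 \<le> CC * x powr pp * T x" using a b T_nonneg[of x] by (meson mult_right_mono order_trans)
  then show ?thesis using CC_ge1 x
    by (simp add: powr_minus field_simps)
qed

end

lemma exp_ub1: "(u::real) \<ge> 0 \<Longrightarrow> exp u \<le> 1 + u + u^2 * exp u"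
proof -
  assume u: "u \<ge> 0"
  have "1 - u \<le> exp (-u)" using exp_ge_add_one_self[of "-u"] by simp
  then have "(1 - u) * exp u \<le> exp (-u) * exp u" by (intro mult_right_mono) auto
  then have a: "exp u - 1 \<le> u * exp u" by (simp add: exp_minus field_simps)
  have "u * (exp u - 1) \<le> u * (u * exp u)" using a u by (intro mult_left_mono) auto
  with a show ?thesis by (simp add: power2_eq_square algebra_simps)
qed

lemma exp_ub2: "(u::real) \<ge> 0 \<Longrightarrow> exp (-u) \<le> 1 - u + u^2"
proof -
  assume u: "u \<ge> 0"
  have l: "1 + u + u^2/2 \<le> exp u" using exp_lower_Taylor_quadratic[OF u] .
  have pos: "0 < 1 + u + u^2/2" using u by (simp add: add_pos_nonneg)
  have "(1 - u + u^2) * (1 + u + u^2/2) = 1 + u^2/2 + u^3/2 + u^4/2"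
    by (simp add: field_simps power2_eq_square power3_eq_cube power4_eq_xxxx)
  also have "\<dots> \<ge> 1" using u by simp
  finally have "1 \<le> (1 - u + u^2) * (1 + u + u^2/2)" .
  also have "\<dots> \<le> (1 - u + u^2) * exp u"
  proof (rule mult_left_mono[OF l])
    have "1 - u + u^2 = (u - 1/2)^2 + 3/4" by (simp add: power2_eq_square algebra_simps)
    moreover have "0 \<le> (u - 1/2)^2" by simp
    ultimately show "0 \<le> 1 - u + u^2" by linarith
  qed
  finally have "1 \<le> (1 - u + u^2) * exp u" .
  then show ?thesis by (simp add: exp_minus field_simps)
qed


lemma qq_nonneg: "qq F k t \<ge> 0" by (simp add: qq_def)
lemma qq_le1: "qq F k t \<le> 1" by (simp add: qq_def)
lemma qq_mono: "t \<le> t' \<Longrightarrow> qq F k t' \<le> qq F k t"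
  unfolding qq_def by (intro measure_pmf.finite_measure_mono) auto
lemma qq_neg: "t < 0 \<Longrightarrow> qq F k t = 1"
proof -
  assume "t < 0"
  then have "{j. real j > t} = UNIV" by auto
  then show ?thesis by (simp add: qq_def)
qed

lemma int_bnd: "(\<And>a. \<bar>f a\<bar> \<le> B) \<Longrightarrow> integrable (measure_pmf M) (f :: 'a \<Rightarrow> real)"
  by (rule measure_pmf.integrable_const_bound[where B=B]) auto

lemma int_qq: "integrable (measure_pmf M) (\<lambda>a. qq F k (g a))"
  by (rule int_bnd[where B=1]) (simp add: qq_nonneg qq_le1 abs_le_iff order_trans[OF _ qq_le1])

context gwp begin

lemma E_ind: "measure_pmf.expectation F (\<lambda>a. if real a > h then 1 else 0) = T h"
proof -
  have "(\<lambda>a. if real a > h then 1 else 0 :: real) = indicator {a. real a > h}"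
    by (auto simp: indicator_def)
  then show ?thesis by (simp add: tail_def)
qed

lemma E_ind_le: "measure_pmf.expectation F (\<lambda>a. if real a \<le> h then 1 else 0) = 1 - T h"
proof -
  have "(\<lambda>a. if real a \<le> h then 1 else 0 :: real) = (\<lambda>a. 1 - (if real a > h then 1 else 0))"
    by auto
  then have "measure_pmf.expectation F (\<lambda>a. if real a \<le> h then 1 else 0 :: real) =
     measure_pmf.expectation F (\<lambda>a. 1 - (if real a > h then 1 else 0 :: real))" by simp
  also have "\<dots> = 1 - T h"
    by (subst Bochner_Integration.integral_diff) (auto intro!: int_bnd[where B=1] simp: E_ind)
  finally show ?thesis .
qed

definition Mh where "Mh l h = measure_pmf.expectation F (\<lambda>a. if real a \<le> h then exp (l * real a) else 0)"

lemma Mh_nonneg: "Mh l h \<ge> 0" unfolding Mh_def by (rule integral_nonneg_AE) auto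

lemma int_Mh: "l \<ge> 0 \<Longrightarrow> integrable (measure_pmf F) (\<lambda>a. if real a \<le> h then exp (l * real a) else 0)"
  by (rule int_bnd[where B="exp (l * max h 0)"]) (auto intro: mult_left_mono)

lemma chernoff_up:
  assumes l: "l \<ge> 0"
  shows "qq F k t \<le> real k * T h + exp (- l * t) * Mh l h ^ k"
proof (induction k arbitrary: t)
  case 0
  show ?case
  proof (cases "t < 0")
    case True
    have "l * t \<le> 0" using l True by (intro mult_nonneg_nonpos) auto
    then have "1 \<le> exp (- l * t)" by simp
    then show ?thesis using True l by (simp add: qq_0 mult_nonneg_nonpos)
  qed (simp add: qq_0)
next
  case (Suc k)
  let ?b = "\<lambda>a. (if real a > h then 1 else 0) + real k * T h +
              exp (- l * t) * Mh l h ^ k * (if real a \<le> h then exp (l * real a) else 0)"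
  have pt: "qq F k (t - real a) \<le> ?b a" for a
  proof (cases "real a > h")
    case True
    have "0 \<le> real k * T h" by (simp add: T_nonneg)
    moreover have "0 \<le> exp (- l * t) * Mh l h ^ k * (if real a \<le> h then exp (l * real a) else 0)"
      using Mh_nonneg[of l h] by simp
    ultimately show ?thesis using qq_le1[of F k "t - real a"] True by simp
  next
    case False
    have "exp (- l * (t - real a)) = exp (- l * t) * exp (l * real a)"
      by (simp add: exp_add[symmetric] algebra_simps)
    then show ?thesis using Suc[of "t - real a"] False by (simp add: algebra_simps)
  qed
  have i1: "integrable (measure_pmf F) (\<lambda>a. if real a > h then 1 else 0::real)"
    by (rule int_bnd[where B=1]) auto
  have i2: "integrable (measure_pmf F) (\<lambda>a. exp (- l * t) * Mh l h ^ k * (if real a \<le> h then exp (l * real a) else 0))"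
    by (intro Bochner_Integration.integrable_mult_right int_Mh l)
  have ib: "integrable (measure_pmf F) ?b"
    by (intro Bochner_Integration.integrable_add i1 i2 measure_pmf.integrable_const)
  have "qq F (Suc k) t \<le> measure_pmf.expectation F ?b"
    unfolding qq_Suc by (rule integral_mono[OF int_qq ib]) (rule pt)
  also have "\<dots> = T h + real k * T h + exp (- l * t) * Mh l h ^ k * Mh l h"
    using i1 i2 by (simp add: Bochner_Integration.integral_add E_ind Mh_def measure_pmf.integrable_const)
  also have "\<dots> = real (Suc k) * T h + exp (- l * t) * Mh l h ^ Suc k"
    by (simp add: algebra_simps)
  finally show ?case .
qed

end

context gwp begin

lemma int_sq: "integrable (measure_pmf F) (\<lambda>a. c * (real a)^2)"
  by (intro Bochner_Integration.integrable_mult_right second_moment)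
lemma int_lin: "integrable (measure_pmf F) (\<lambda>a. c * real a)"
  by (intro Bochner_Integration.integrable_mult_right int_real)

lemma Mh_bound:
  assumes l: "l \<ge> 0" and h: "h \<ge> 0"
  shows "Mh l h \<le> exp (l * m + l^2 * s2 * exp (l * h))"
proof -
  let ?g = "\<lambda>a. 1 + l * real a + (l^2 * exp (l * h)) * (real a)^2"
  have pt: "(if real a \<le> h then exp (l * real a) else 0) \<le> ?g a" for a
  proof (cases "real a \<le> h")
    case True
    have u: "l * real a \<ge> 0" using l by simp
    have "exp (l * real a) \<le> 1 + l * real a + (l * real a)^2 * exp (l * real a)"
      by (rule exp_ub1[OF u])
    also have "(l * real a)^2 * exp (l * real a) \<le> (l * real a)^2 * exp (l * h)"
      using True l by (intro mult_left_mono) (auto intro: mult_left_mono)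
    finally show ?thesis using True by (simp add: power_mult_distrib algebra_simps)
  next
    case False
    have "0 \<le> ?g a" using l by (intro add_nonneg_nonneg) auto
    then show ?thesis using False by simp
  qed
  have ig: "integrable (measure_pmf F) ?g"
    by (intro Bochner_Integration.integrable_add int_sq int_lin measure_pmf.integrable_const)
  have "Mh l h \<le> measure_pmf.expectation F ?g"
    unfolding Mh_def by (rule integral_mono[OF int_Mh[OF l] ig]) (rule pt)
  also have "\<dots> = 1 + l * m + l^2 * exp (l * h) * s2"
    using int_sq int_lin
    by (simp add: Bochner_Integration.integral_add measure_pmf.integrable_const s2_def m_def')
  also have "\<dots> \<le> exp (l * m + l^2 * s2 * exp (l * h))"
    using exp_ge_add_one_self[of "l * m + l^2 * s2 * exp (l * h)"] by (simp add: algebra_simps)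
  finally show ?thesis .
qed

lemma chernoff_up':
  assumes l: "l \<ge> 0" and h: "h \<ge> 0"
  shows "qq F k t \<le> real k * T h + exp (- l * t + real k * (l * m + l^2 * s2 * exp (l * h)))"
proof -
  let ?K = "real k * (l * m + l^2 * s2 * exp (l * h))"
  have "Mh l h ^ k \<le> exp (l * m + l^2 * s2 * exp (l * h)) ^ k"
    by (intro power_mono Mh_bound Mh_nonneg l h)
  also have "\<dots> = exp ?K"
    by (simp add: exp_of_nat_mult)
  finally have a: "Mh l h ^ k \<le> exp ?K" .
  have b: "exp (- l * t) * Mh l h ^ k \<le> exp (- l * t) * exp ?K"
    using a by (intro mult_left_mono) auto
  have c: "exp (- l * t) * exp ?K = exp (- l * t + ?K)" by (simp only: exp_add)
  show ?thesis using chernoff_up[OF l, of k t h] b c by linarith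
qed

definition Ml where "Ml l = measure_pmf.expectation F (\<lambda>a. exp (- l * real a))"

lemma int_Ml: "l \<ge> 0 \<Longrightarrow> integrable (measure_pmf F) (\<lambda>a. exp (- l * real a))"
  by (rule int_bnd[where B=1]) (auto simp: mult_nonneg_nonneg)

lemma Ml_nonneg: "Ml l \<ge> 0" unfolding Ml_def by (rule integral_nonneg_AE) auto

lemma chernoff_low:
  assumes l: "l \<ge> 0"
  shows "1 - qq F k t \<le> exp (l * t) * Ml l ^ k"
proof (induction k arbitrary: t)
  case 0
  show ?case
  proof (cases "t < 0")
    case False
    then have "l * t \<ge> 0" using l by simp
    then show ?thesis using False by (simp add: qq_0)
  qed (simp add: qq_0)
next
  case (Suc k)
  have "1 - qq F (Suc k) t = measure_pmf.expectation F (\<lambda>a. 1 - qq F k (t - real a))"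
    unfolding qq_Suc
    by (simp add: Bochner_Integration.integral_diff[OF measure_pmf.integrable_const int_qq])
  also have "\<dots> \<le> measure_pmf.expectation F (\<lambda>a. exp (l * t) * Ml l ^ k * exp (- l * real a))"
  proof (rule integral_mono)
    show "integrable (measure_pmf F) (\<lambda>a. 1 - qq F k (t - real a))"
      by (intro Bochner_Integration.integrable_diff measure_pmf.integrable_const int_qq)
    show "integrable (measure_pmf F) (\<lambda>a. exp (l * t) * Ml l ^ k * exp (- l * real a))"
      by (intro Bochner_Integration.integrable_mult_right int_Ml l)
    fix a
    have "exp (l * (t - real a)) = exp (l * t) * exp (- l * real a)"
      by (simp add: exp_add[symmetric] algebra_simps)
    then show "1 - qq F k (t - real a) \<le> exp (l * t) * Ml l ^ k * exp (- l * real a)"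
      using Suc[of "t - real a"] by (simp add: algebra_simps)
  qed
  also have "\<dots> = exp (l * t) * Ml l ^ Suc k"
    by (simp add: Ml_def)
  finally show ?case .
qed

lemma Ml_bound:
  assumes l: "l \<ge> 0"
  shows "Ml l \<le> exp (- l * m + l^2 * s2)"
proof -
  let ?g = "\<lambda>a. 1 + (- l) * real a + l^2 * (real a)^2"
  have ig: "integrable (measure_pmf F) ?g"
    by (intro Bochner_Integration.integrable_add int_sq int_lin measure_pmf.integrable_const)
  have "Ml l \<le> measure_pmf.expectation F ?g"
    unfolding Ml_def
  proof (rule integral_mono[OF int_Ml[OF l] ig])
    fix a
    have "exp (- (l * real a)) \<le> 1 - l * real a + (l * real a)^2"
      by (rule exp_ub2) (use l in simp)
    then show "exp (- l * real a) \<le> ?g a" by (simp add: power_mult_distrib)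
  qed
  also have "\<dots> = 1 - l * m + l^2 * s2"
    using int_sq int_lin
    by (simp add: Bochner_Integration.integral_add measure_pmf.integrable_const s2_def m_def')
  also have "\<dots> \<le> exp (- l * m + l^2 * s2)"
    using exp_ge_add_one_self[of "- l * m + l^2 * s2"] by (simp add: algebra_simps)
  finally show ?thesis .
qed

lemma chernoff_low':
  assumes l: "l \<ge> 0"
  shows "1 - qq F k t \<le> exp (l * t - real k * l * m + real k * l^2 * s2)"
proof -
  have "Ml l ^ k \<le> exp (- l * m + l^2 * s2) ^ k"
    by (intro power_mono Ml_bound Ml_nonneg l)
  also have "\<dots> = exp (real k * (- l * m + l^2 * s2))"
    by (simp add: exp_of_nat_mult)
  finally have "exp (l * t) * Ml l ^ k \<le> exp (l * t) * exp (real k * (- l * m + l^2 * s2))"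
    by (intro mult_left_mono) auto
  then show ?thesis using chernoff_low[OF l, of k t] by (simp add: exp_add[symmetric] algebra_simps)
qed

lemma qq_lower: "qq F k t \<ge> real k * T t * (1 - real k * T t)"
proof (induction k)
  case 0 then show ?case by (simp add: qq_nonneg)
next
  case (Suc k)
  let ?b = "\<lambda>a. (if real a > t then 1 else 0) + (if real a \<le> t then 1 else 0) * qq F k t"
  have i1: "integrable (measure_pmf F) (\<lambda>a. if real a > t then 1 else 0::real)"
    by (rule int_bnd[where B=1]) auto
  have i2: "integrable (measure_pmf F) (\<lambda>a. if real a \<le> t then 1 else 0::real)"
    by (rule int_bnd[where B=1]) auto
  have "measure_pmf.expectation F ?b \<le> qq F (Suc k) t"
    unfolding qq_Suc
  proof (rule integral_mono)
    show "integrable (measure_pmf F) ?b"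
      by (intro Bochner_Integration.integrable_add i1 Bochner_Integration.integrable_mult_left i2)
    show "integrable (measure_pmf F) (\<lambda>a. qq F k (t - real a))" by (rule int_qq)
    fix a
    show "?b a \<le> qq F k (t - real a)"
    proof (cases "real a > t")
      case True then show ?thesis by (simp add: qq_neg)
    next
      case False then show ?thesis by (simp add: qq_mono)
    qed
  qed
  moreover have "measure_pmf.expectation F ?b = T t + (1 - T t) * qq F k t"
    using i1 i2 by (simp add: Bochner_Integration.integral_add E_ind E_ind_le)
  ultimately have a: "T t + (1 - T t) * qq F k t \<le> qq F (Suc k) t" by simp
  have b: "(1 - T t) * (real k * T t * (1 - real k * T t)) \<le> (1 - T t) * qq F k t"
    using Suc T_le1[of t] by (intro mult_left_mono) auto
  have c: "real (Suc k) * T t * (1 - real (Suc k) * T t) \<le> T t + (1 - T t) * (real k * T t * (1 - real k * T t))"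
  proof -
    have "T t + (1 - T t) * (real k * T t * (1 - real k * T t)) - real (Suc k) * T t * (1 - real (Suc k) * T t)
       = (real k + 1) * (T t)^2 + (real k)^2 * (T t)^3"
      by (simp add: algebra_simps power2_eq_square power3_eq_cube)
    also have "\<dots> \<ge> 0" using T_nonneg[of t] by simp
    finally show ?thesis by simp
  qed
  from a b c show ?case by linarith
qed

end

lemma fl_mult: "(c::real) > 0 \<Longrightarrow> filterlim (\<lambda>y. c * y) at_top at_top"
  by (rule filterlim_tendsto_pos_mult_at_top[OF tendsto_const _ filterlim_ident])

lemma fl_minus_powr:
  assumes "b < 1"
  shows "filterlim (\<lambda>y::real. y - y powr b) at_top at_top"
proof -
  have "eventually (\<lambda>y. y powr b \<le> (1/2) * y powr 1) at_top" by (rule ev_powr_le) (use assms in auto)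
  then have "eventually (\<lambda>y. (1/2) * y \<le> y - y powr b) at_top"
    using eventually_gt_at_top[of 0] by eventually_elim auto
  from filterlim_at_top_mono[OF fl_mult[of "1/2"] this] show ?thesis by simp
qed

lemma fl_plus_powr: "filterlim (\<lambda>y::real. y + y powr b) at_top at_top"
proof -
  have "eventually (\<lambda>y. y \<le> y + y powr b) at_top" by auto
  from filterlim_at_top_mono[OF filterlim_ident this] show ?thesis .
qed

lemma ev_compose: "filterlim f at_top at_top \<Longrightarrow> eventually P at_top \<Longrightarrow> eventually (\<lambda>x. P (f x)) at_top"
  by (simp add: filterlim_iff)

context gwp begin

definition gm where "gm = min \<gamma> 1"
definition be where "be = (1/2 + gm) / 2"
definition b2 where "b2 = (be + gm) / 2"
definition be' where "be' = (1/2 + be) / 2"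

lemma gm: "gm > 1/2" "gm \<le> 1" "gm \<le> \<gamma>" using gamma by (auto simp: gm_def)
lemma be: "be > 1/2" "be < 1" "be < \<gamma>" "be < gm" using gm by (auto simp: be_def)
lemma b2: "b2 > be" "b2 < 1" "b2 < \<gamma>" using gm be by (auto simp: b2_def)
lemma be': "be' > 1/2" "be' < be" using be by (auto simp: be'_def)

lemma ins_low: "\<delta> > 0 \<Longrightarrow> eventually (\<lambda>x. T (x + x powr \<gamma>) \<ge> (1 - \<delta>) * T x) at_top"
proof -
  assume d: "\<delta> > 0"
  have "((\<lambda>x. T (x + x powr \<gamma>) / T x) \<longlongrightarrow> 1) at_top"
    using asymp_equivD[OF insensitive] T_pos by (simp add: less_imp_neq[OF T_pos, symmetric])
  then have "eventually (\<lambda>x. T (x + x powr \<gamma>) / T x > 1 - \<delta>) at_top"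
    using d by (intro order_tendstoD) auto
  then show ?thesis
  proof eventually_elim
    case (elim x)
    then have "(1 - \<delta>) * T x < T (x + x powr \<gamma>)" using pos_less_divide_eq[OF T_pos[of x]] by simp
    then show ?case by simp
  qed
qed

lemma ins_up_base:
  assumes d: "\<delta> > 0"
  shows "eventually (\<lambda>u. T (u - u powr b2) \<le> (1 + \<delta>) * T u) at_top"
proof -
  define d' where "d' = \<delta> / (1 + \<delta>)"
  have d': "d' > 0" "d' < 1" using d by (auto simp: d'_def)
  have fl: "filterlim (\<lambda>u. u - u powr b2) at_top at_top" by (rule fl_minus_powr) (use b2 in auto)
  have e1: "eventually (\<lambda>u. T ((u - u powr b2) + (u - u powr b2) powr \<gamma>) \<ge> (1 - d') * T (u - u powr b2)) at_top"
    by (rule ev_compose[OF fl ins_low[OF d'(1)]])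
  have e2: "eventually (\<lambda>u. u powr b2 \<le> (1/2) * u powr 1) at_top" by (rule ev_powr_le) (use b2 in auto)
  have e3: "eventually (\<lambda>u. u powr b2 \<le> (1/2) powr \<gamma> * u powr \<gamma>) at_top" by (rule ev_powr_le) (use b2 in auto)
  show ?thesis using e1 e2 e3 eventually_gt_at_top[of 0]
  proof eventually_elim
    case (elim u)
    let ?v = "u - u powr b2"
    have v: "?v \<ge> u / 2" using elim by simp
    have vpos: "?v > 0" using v elim by simp
    have "(u/2) powr \<gamma> \<le> ?v powr \<gamma>" using v elim gamma by (intro powr_mono2) auto
    moreover have "(u/2) powr \<gamma> = (1/2) powr \<gamma> * u powr \<gamma>" using elim by (simp add: powr_mult[symmetric])
    ultimately have "u \<le> ?v + ?v powr \<gamma>" using elim by simp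
    then have "T (?v + ?v powr \<gamma>) \<le> T u" by (rule T_mono)
    with elim have "(1 - d') * T ?v \<le> T u" by simp
    then have "T ?v \<le> T u / (1 - d')" using d' by (simp add: field_simps)
    also have "T u / (1 - d') = (1 + \<delta>) * T u" using d by (simp add: d'_def field_simps)
    finally show ?case .
  qed
qed

lemma ins_up:
  assumes d: "\<delta> > 0" and c: "c > 0"
  shows "eventually (\<lambda>y. T (c * (y - y powr be)) \<le> (1 + \<delta>) * T (c * y)) at_top"
proof -
  have e1: "eventually (\<lambda>y. T (c * y - (c * y) powr b2) \<le> (1 + \<delta>) * T (c * y)) at_top"
    by (rule ev_compose[OF fl_mult[OF c] ins_up_base[OF d]])
  have e2: "eventually (\<lambda>y. y powr be \<le> c powr (b2 - 1) * y powr b2) at_top"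
    by (rule ev_powr_le) (use b2 c in auto)
  show ?thesis using e1 e2 eventually_gt_at_top[of 0]
  proof eventually_elim
    case (elim y)
    have "c * y powr be \<le> c * (c powr (b2 - 1) * y powr b2)" using elim c by (intro mult_left_mono) auto
    also have "\<dots> = (c * y) powr b2" using c elim by (simp add: powr_mult powr_diff field_simps)
    finally have "c * y - (c * y) powr b2 \<le> c * (y - y powr be)" by (simp add: algebra_simps)
    then have "T (c * (y - y powr be)) \<le> T (c * y - (c * y) powr b2)" by (rule T_mono)
    with elim show ?case by simp
  qed
qed

lemma ins_lo:
  assumes d: "\<delta> > 0" and c: "c > 0"
  shows "eventually (\<lambda>y. T (c * (y + y powr be)) \<ge> (1 - \<delta>) * T (c * y)) at_top"
proof -
  have e1: "eventually (\<lambda>y. T (c * y + (c * y) powr \<gamma>) \<ge> (1 - \<delta>) * T (c * y)) at_top"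
    by (rule ev_compose[OF fl_mult[OF c] ins_low[OF d]])
  have e2: "eventually (\<lambda>y. y powr be \<le> c powr (\<gamma> - 1) * y powr \<gamma>) at_top"
    by (rule ev_powr_le) (use be c in auto)
  show ?thesis using e1 e2 eventually_gt_at_top[of 0]
  proof eventually_elim
    case (elim y)
    have "c * y powr be \<le> c * (c powr (\<gamma> - 1) * y powr \<gamma>)" using elim c by (intro mult_left_mono) auto
    also have "\<dots> = (c * y) powr \<gamma>" using c elim by (simp add: powr_mult powr_diff field_simps)
    finally have "c * (y + y powr be) \<le> c * y + (c * y) powr \<gamma>" by (simp add: algebra_simps)
    then have "T (c * y + (c * y) powr \<gamma>) \<le> T (c * (y + y powr be))" by (rule T_mono)
    with elim show ?case by simp
  qed
qed

end

context gwp begin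

lemma int_ind: "integrable (measure_pmf F) (\<lambda>a. if real a > x then 1 else 0 :: real)"
  by (rule int_bnd[where B=1]) auto

lemma E_ind_mult: "measure_pmf.expectation F (\<lambda>a. (if real a > x then 1 else 0) * c) = T x * c"
  using int_ind by (simp add: E_ind)

lemma qq_split_bound:
  "qq F (Suc k) t \<le> qq F k (t - t powr be) + T (t powr be) * qq F k (t/2) + T (t/2) * qq F k (t powr be)
       + T (t - t powr be)"
proof -
  define f2 where "f2 = (\<lambda>a. (if real a > t powr be then 1 else 0) * qq F k (t/2))"
  define f3 where "f3 = (\<lambda>a. (if real a > t/2 then 1 else 0) * qq F k (t powr be))"
  define f4 where "f4 = (\<lambda>a. (if real a > t - t powr be then 1 else (0::real)))"
  let ?b = "\<lambda>a. qq F k (t - t powr be) + f2 a + f3 a + f4 a"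
  have pt: "qq F k (t - real a) \<le> ?b a" for a
  proof -
    have nn: "0 \<le> qq F k (t - t powr be)" "0 \<le> f2 a" "0 \<le> f3 a" "0 \<le> f4 a"
      by (auto simp: qq_nonneg f2_def f3_def f4_def)
    consider "real a \<le> t powr be" | "t powr be < real a" "real a \<le> t/2" | "t/2 < real a" "real a \<le> t - t powr be"
      | "real a > t - t powr be" by linarith
    then show ?thesis
    proof cases
      case 1 then have "qq F k (t - real a) \<le> qq F k (t - t powr be)" by (intro qq_mono) auto
      then show ?thesis using nn by linarith
    next
      case 2 then have "qq F k (t - real a) \<le> qq F k (t/2)" by (intro qq_mono) auto
      then show ?thesis using nn 2 by (simp add: f2_def)
    next
      case 3 then have "qq F k (t - real a) \<le> qq F k (t powr be)" by (intro qq_mono) auto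
      then show ?thesis using nn 3 by (simp add: f3_def)
    next
      case 4 then show ?thesis using nn qq_le1[of F k "t - real a"] by (simp add: f4_def)
    qed
  qed
  have i2: "integrable (measure_pmf F) f2" unfolding f2_def by (intro Bochner_Integration.integrable_mult_left int_ind)
  have i3: "integrable (measure_pmf F) f3" unfolding f3_def by (intro Bochner_Integration.integrable_mult_left int_ind)
  have i4: "integrable (measure_pmf F) f4" unfolding f4_def by (rule int_ind)
  have E2: "measure_pmf.expectation F f2 = T (t powr be) * qq F k (t/2)" unfolding f2_def by (rule E_ind_mult)
  have E3: "measure_pmf.expectation F f3 = T (t/2) * qq F k (t powr be)" unfolding f3_def by (rule E_ind_mult)
  have E4: "measure_pmf.expectation F f4 = T (t - t powr be)" unfolding f4_def by (rule E_ind)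
  have i12: "integrable (measure_pmf F) (\<lambda>a. qq F k (t - t powr be) + f2 a)"
    by (intro Bochner_Integration.integrable_add measure_pmf.integrable_const i2)
  have i123: "integrable (measure_pmf F) (\<lambda>a. qq F k (t - t powr be) + f2 a + f3 a)"
    by (intro Bochner_Integration.integrable_add i12 i3)
  have ib: "integrable (measure_pmf F) ?b"
    by (intro Bochner_Integration.integrable_add i123 i4)
  have "qq F (Suc k) t \<le> measure_pmf.expectation F ?b"
    unfolding qq_Suc by (rule integral_mono[OF int_qq ib]) (rule pt)
  also have "\<dots> = qq F k (t - t powr be) + T (t powr be) * qq F k (t/2) + T (t/2) * qq F k (t powr be)
       + T (t - t powr be)"
    by (simp only: Bochner_Integration.integral_add[OF i123 i4] Bochner_Integration.integral_add[OF i12 i3]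
      Bochner_Integration.integral_add[OF measure_pmf.integrable_const i2] E2 E3 E4) simp
  finally show ?thesis .
qed

lemma fl_powr_be: "filterlim (\<lambda>t. t powr be) at_top at_top"
  by (rule powr_at_top) (use be in auto)

lemma ev_T_small: "\<delta> > 0 \<Longrightarrow> eventually (\<lambda>t. T t \<le> \<delta>) at_top"
  using order_tendstoD(2)[OF T_tendsto0, of \<delta>] by (auto elim: eventually_mono)

lemma qq_upper_fixed:
  "\<delta> > 0 \<Longrightarrow> eventually (\<lambda>t. qq F k t \<le> (real k + \<delta>) * T t) at_top"
proof (induction k arbitrary: \<delta>)
  case 0
  show ?case using eventually_ge_at_top[of 0]
    by eventually_elim (use 0 T_nonneg in \<open>auto simp: qq_0\<close>)
next
  case (Suc k)
  define K1 where "K1 = real k + 3 + (real k + 2) * CC"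
  have K1: "K1 > 0" using CC_ge1 by (simp add: K1_def add_pos_nonneg)
  define d where "d = min 1 (\<delta> / K1)"
  have d: "d > 0" "d \<le> 1" "d * K1 \<le> \<delta>" using Suc.prems K1 by (auto simp: d_def min_def field_simps)
  have e1: "eventually (\<lambda>t. qq F k (t - t powr be) \<le> (real k + d) * T (t - t powr be)) at_top"
    by (rule ev_compose[OF fl_minus_powr Suc.IH[OF d(1)]]) (use be in auto)
  have e2: "eventually (\<lambda>t. T (1 * (t - t powr be)) \<le> (1 + d) * T (1 * t)) at_top"
    by (rule ins_up[OF d(1)]) simp
  have e3: "eventually (\<lambda>t. qq F k ((1/2) * t) \<le> (real k + 1) * T ((1/2) * t)) at_top"
    by (rule ev_compose[OF fl_mult Suc.IH]) auto
  have e4: "eventually (\<lambda>t. T (t powr be) \<le> d) at_top"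
    by (rule ev_compose[OF fl_powr_be ev_T_small[OF d(1)]])
  have e5: "eventually (\<lambda>t. qq F k (t powr be) \<le> d) at_top"
  proof -
    have "eventually (\<lambda>u. qq F k u \<le> (real k + 1) * T u) at_top" by (rule Suc.IH) simp
    moreover have "eventually (\<lambda>u. T u \<le> d / (real k + 1)) at_top" by (rule ev_T_small) (use d in simp)
    ultimately have "eventually (\<lambda>u. qq F k u \<le> d) at_top"
    proof eventually_elim
      case (elim u)
      have "(real k + 1) * T u \<le> (real k + 1) * (d / (real k + 1))" using elim by (intro mult_left_mono) auto
      then show ?case using elim by simp
    qed
    then show ?thesis by (rule ev_compose[OF fl_powr_be])
  qed
  show ?case using e1 e2 e3 e4 e5
  proof eventually_elim
    case (elim t)
    let ?T = "T t"
    have Tn: "?T \<ge> 0" by (rule T_nonneg)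
    have h2: "T (t/2) \<le> CC * ?T" using CC[of t] by simp
    have A1: "qq F k (t - t powr be) \<le> (real k + d) * ((1 + d) * ?T)"
      using elim(1,2) d by (smt (verit) mult_left_mono of_nat_0_le_iff mult_nonneg_nonneg)
    have A2: "T (t powr be) * qq F k (t/2) \<le> d * ((real k + 1) * (CC * ?T))"
    proof -
      have "qq F k (t/2) \<le> (real k + 1) * (CC * ?T)"
      proof -
        have "(real k + 1) * T (t/2) \<le> (real k + 1) * (CC * T t)" by (rule mult_left_mono[OF h2]) simp
        moreover have "qq F k (t/2) \<le> (real k + 1) * T (t/2)" using elim(3) by simp
        ultimately show ?thesis by linarith
      qed
      then show ?thesis using elim(4) d by (intro mult_mono) (auto simp: T_nonneg qq_nonneg)
    qed
    have A3: "T (t/2) * qq F k (t powr be) \<le> (CC * ?T) * d"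
      using h2 elim(5) by (intro mult_mono) (auto simp: T_nonneg qq_nonneg intro!: mult_nonneg_nonneg order_trans[OF zero_le_one CC_ge1])
    have A4: "T (t - t powr be) \<le> (1 + d) * ?T" using elim(2) by simp
    have "qq F (Suc k) t \<le> (real k + d) * ((1 + d) * ?T) + d * ((real k + 1) * (CC * ?T)) + (CC * ?T) * d + (1 + d) * ?T"
      using qq_split_bound[of k t] A1 A2 A3 A4 by linarith
    also have "\<dots> = (real k + 1) * ?T + d * (real k + 2 + d + (real k + 1) * CC + CC) * ?T"
      by (simp add: algebra_simps)
    also have "\<dots> \<le> (real k + 1) * ?T + d * K1 * ?T"
    proof -
      have "d * (real k + 2 + d + (real k + 1) * CC + CC) \<le> d * K1"
        using d by (intro mult_left_mono) (auto simp: K1_def algebra_simps)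
      then show ?thesis using Tn by (simp add: mult_right_mono)
    qed
    also have "\<dots> \<le> (real k + 1) * ?T + \<delta> * ?T" using d Tn by (simp add: mult_right_mono)
    finally show ?case by (simp add: algebra_simps)
  qed
qed

end

lemma ev_powr_small:
  assumes "b < 0" "c > 0"
  shows "eventually (\<lambda>y::real. K * y powr b \<le> c) at_top"
proof -
  have "((\<lambda>y. K * y powr b) \<longlongrightarrow> K * 0) at_top"
    using assms by (intro tendsto_mult tendsto_const tendsto_neg_powr filterlim_ident)
  then have "eventually (\<lambda>y. K * y powr b < c) at_top" using assms by (intro order_tendstoD) auto
  then show ?thesis by (auto elim: eventually_mono)
qed

lemma ev_powr_large:
  assumes "b > 0"
  shows "eventually (\<lambda>y::real. y powr b \<ge> c) at_top"
  using filterlim_at_top[THEN iffD1, OF powr_at_top[OF assms]] by auto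

context gwp begin

lemma s2_pos: "s2 > 0"
proof -
  have "m \<le> s2" unfolding m_def' s2_def
    by (rule integral_mono[OF int_real second_moment]) (rule real_le_sq)
  then show ?thesis using m_pos by simp
qed

definition rho where
  "rho y = y * T (y powr be') + exp (- m * y powr (be - be') + s2 * exp 1 * y powr (1 - 2*be'))"

lemma mid_bound:
  assumes y: "y \<ge> 1" and k: "real k \<le> y - y powr be"
  shows "qq F k (m*y) \<le> rho y"
proof -
  define l where "l = y powr (- be')"
  define h where "h = y powr be'"
  have ypos: "y > 0" using y by simp
  have l0: "l \<ge> 0" "h \<ge> 0" by (auto simp: l_def h_def)
  have lh: "l * h = 1" using ypos unfolding l_def h_def by (simp add: powr_add[symmetric])
  have eh: "exp (l * h) = exp 1" using lh by simp
  have k0: "real k \<le> y" using k powr_ge_zero[of y be] by linarith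
  have c: "qq F k (m*y) \<le> real k * T h + exp (- l * (m*y) + real k * (l * m + l^2 * s2 * exp (l * h)))"
    by (rule chernoff_up'[OF l0])
  have t1: "real k * T h \<le> y * T (y powr be')"
    unfolding h_def by (rule mult_right_mono[OF k0 T_nonneg])
  have "- l * (m*y) + real k * (l * m + l^2 * s2 * exp (l * h))
      = - (l * m) * (y - real k) + real k * (l^2 * s2 * exp 1)"
    unfolding eh by (simp add: algebra_simps)
  also have "\<dots> \<le> - (l * m) * y powr be + y * (l^2 * s2 * exp 1)"
  proof (intro add_mono)
    have "(l * m) * y powr be \<le> (l * m) * (y - real k)"
      using k l0 m_pos by (intro mult_left_mono) auto
    then show "- (l * m) * (y - real k) \<le> - (l * m) * y powr be" by simp
    show "real k * (l^2 * s2 * exp 1) \<le> y * (l^2 * s2 * exp 1)"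
      using k0 s2_nonneg by (intro mult_right_mono) auto
  qed
  also have "\<dots> = - m * y powr (be - be') + s2 * exp 1 * y powr (1 - 2*be')"
  proof -
    have a: "l * y powr be = y powr (be - be')" unfolding l_def by (simp add: powr_add[symmetric])
    have l2: "l^2 = y powr (- 2*be')" unfolding l_def power2_eq_square by (simp add: powr_add[symmetric])
    have b: "y * l^2 = y powr (1 - 2*be')" unfolding l2 using powr_mult_base[OF less_imp_le[OF ypos], of "- 2*be'"] by simp
    have "- (l * m) * y powr be + y * (l^2 * s2 * exp 1) = - m * (l * y powr be) + s2 * exp 1 * (y * l^2)"
      by (simp add: algebra_simps)
    then show ?thesis using a b by simp
  qed
  finally have e: "exp (- l * (m*y) + real k * (l * m + l^2 * s2 * exp (l * h))) \<le>
      exp (- m * y powr (be - be') + s2 * exp 1 * y powr (1 - 2*be'))" by simp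
  show ?thesis using c t1 e unfolding rho_def by linarith
qed

lemma rho_small:
  assumes d: "\<delta> > 0"
  shows "eventually (\<lambda>y. rho y \<le> \<delta>) at_top"
proof -
  have e1: "eventually (\<lambda>y. s2 * y powr (1 - 2*be') \<le> \<delta>/2) at_top"
    by (rule ev_powr_small) (use be' d in auto)
  have e2: "eventually (\<lambda>y. (s2 * exp 1) * y powr (1 - 2*be') \<le> 1) at_top"
    by (rule ev_powr_small) (use be' in auto)
  have e3: "eventually (\<lambda>y. y powr (be - be') \<ge> (1 - ln (\<delta>/2)) / m) at_top"
    by (rule ev_powr_large) (use be' in auto)
  show ?thesis using e1 e2 e3 eventually_ge_at_top[of 1]
  proof eventually_elim
    case (elim y)
    have ypos: "y > 0" using elim by simp
    have yb: "y powr be' > 0" using ypos by simp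
    have "T (y powr be') \<le> s2 / (y powr be')^2" by (rule T_markov2[OF yb])
    then have "y * T (y powr be') \<le> y * (s2 / (y powr be')^2)" using ypos by (intro mult_left_mono) auto
    also have "y * (s2 / (y powr be')^2) = s2 * y powr (1 - 2*be')"
      using ypos by (simp add: power2_eq_square powr_add[symmetric] powr_diff field_simps)
    finally have a: "y * T (y powr be') \<le> \<delta>/2" using elim by linarith
    have "m * ((1 - ln (\<delta>/2)) / m) \<le> m * y powr (be - be')" using elim m_pos by (intro mult_left_mono) auto
    then have "1 - ln (\<delta>/2) \<le> m * y powr (be - be')" using m_pos by simp
    then have "- m * y powr (be - be') + s2 * exp 1 * y powr (1 - 2*be') \<le> ln (\<delta>/2)"
      using elim by linarith
    then have "exp (- m * y powr (be - be') + s2 * exp 1 * y powr (1 - 2*be')) \<le> exp (ln (\<delta>/2))"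
      by simp
    also have "\<dots> = \<delta>/2" using d by simp
    finally show ?case using a unfolding rho_def by linarith
  qed
qed

end

context gwp begin

lemma low_tail:
  assumes d: "\<delta> > 0"
  shows "eventually (\<lambda>y. \<forall>k. real k \<ge> y + y powr be \<longrightarrow> qq F k (m*y) \<ge> 1 - \<delta>) at_top"
proof -
  define c where "c = m / (2 * s2)"
  have c: "c > 0" "c * s2 = m/2" using m_pos s2_pos by (auto simp: c_def)
  have e1: "eventually (\<lambda>y. y powr (3*be-2) \<le> (1/2) * y powr (2*be-1)) at_top"
    by (rule ev_powr_le) (use be in auto)
  have e2: "eventually (\<lambda>y. y powr (2*be-1) \<ge> - ln \<delta> * 4 / (c * m)) at_top"
    by (rule ev_powr_large) (use be in auto)
  show ?thesis using e1 e2 eventually_ge_at_top[of 1]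
  proof eventually_elim
    case (elim y)
    have ypos: "y > 0" using elim by simp
    define P where "P = y powr (be - 1)"
    define l where "l = c * P"
    have P0: "P \<ge> 0" "P \<le> 1"
    proof -
      show "P \<ge> 0" by (simp add: P_def)
      have "y powr (be - 1) \<le> y powr 0" using elim be by (intro powr_mono) auto
      then show "P \<le> 1" using ypos by (simp add: P_def)
    qed
    have l0: "l \<ge> 0" using c P0 by (simp add: l_def)
    have ls: "l * s2 \<le> m/2" using c P0 m_pos
      by (simp add: l_def) (metis c(2) mult.commute mult.left_commute mult_left_le less_imp_le half_gt_zero)
    have f1: "P * y powr be = y powr (2*be-1)" using ypos by (simp add: P_def powr_add[symmetric])
    have f2: "y * P^2 = y powr (2*be-1)"
    proof -
      have "P^2 = y powr (2*be - 2)" by (simp add: P_def power2_eq_square powr_add[symmetric])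
      then have "y * P^2 = y powr (1 + (2*be - 2))" using powr_mult_base[OF less_imp_le[OF ypos]] by simp
      also have "1 + (2*be - 2) = 2*be - 1" by simp
      finally show ?thesis .
    qed
    have f3: "y powr be * P^2 = y powr (3*be-2)" using ypos
      by (simp add: P_def power2_eq_square powr_add[symmetric])
    show ?case
    proof (intro allI impI)
      fix k assume k: "real k \<ge> y + y powr be"
      have D0: "l * m - l^2 * s2 \<ge> 0"
      proof -
        have "l * (l * s2) \<le> l * m" using ls l0 m_pos by (intro mult_left_mono) auto
        then show ?thesis by (simp add: power2_eq_square algebra_simps)
      qed
      have "l * (m * y) - real k * l * m + real k * l^2 * s2 = l * m * y - real k * (l * m - l^2 * s2)"
        by (simp add: algebra_simps)
      also have "\<dots> \<le> l * m * y - (y + y powr be) * (l * m - l^2 * s2)"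
        using k D0 by (simp add: mult_right_mono)
      also have "\<dots> = - (c * m) * (P * y powr be) + (c * m / 2) * (y * P^2 + y powr be * P^2)"
      proof -
        have "l^2 * s2 = c * (c * s2) * P^2" by (simp add: l_def power2_eq_square algebra_simps)
        then have eq: "l^2 * s2 = (c * m / 2) * P^2" using c by simp
        show ?thesis unfolding eq by (simp add: l_def algebra_simps)
      qed
      also have "\<dots> = (c * m / 2) * (y powr (3*be-2) - y powr (2*be-1))"
        using f1 f2 f3 by (simp add: algebra_simps)
      also have "\<dots> \<le> (c * m / 2) * (- (1/2) * y powr (2*be-1))"
        using elim c m_pos by (intro mult_left_mono) auto
      also have "\<dots> = - (c * m / 4) * y powr (2*be-1)" by simp
      also have "\<dots> \<le> ln \<delta>"
      proof -
        have "(c * m / 4) * (- ln \<delta> * 4 / (c * m)) \<le> (c * m / 4) * y powr (2*be-1)"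
          using elim c m_pos by (intro mult_left_mono) auto
        then show ?thesis using c m_pos by simp
      qed
      finally have "exp (l * (m * y) - real k * l * m + real k * l^2 * s2) \<le> exp (ln \<delta>)" by simp
      then have "1 - qq F k (m*y) \<le> \<delta>" using chernoff_low'[OF l0, of k "m*y"] d by simp
      then show "qq F k (m*y) \<ge> 1 - \<delta>" by simp
    qed
  qed
qed

end

context gwp begin

definition jj where "jj = nat \<lceil>log 2 (4 * (pp + 1))\<rceil>"
definition C1 where "C1 = CC^jj + 1"
definition aa where "aa = 2 * (pp + 1) / m"

lemma jj: "4 * (pp + 1) \<le> 2^jj"
proof -
  have pos: "4 * (pp + 1) > 0" using pp_nonneg by simp
  have "real jj \<ge> log 2 (4 * (pp + 1))" unfolding jj_def by linarith
  then have "2 powr (log 2 (4 * (pp + 1))) \<le> 2 powr real jj" by (intro powr_mono) auto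
  then show ?thesis using pos by (simp add: powr_realpow)
qed

lemma C1_pos: "C1 \<ge> 1" using CC_ge1 by (simp add: C1_def)

lemma T1_pos: "T 1 / CC > 0" using T_pos[of 1] CC_ge1 by simp

lemma small_k_bound:
  "eventually (\<lambda>y. \<forall>k. real k \<le> y/2 \<longrightarrow> qq F k (m*y) \<le> C1 * real k * T (m*y)) at_top"
proof -
  have e2: "eventually (\<lambda>y. (64 * aa^2 * s2) * y powr (-1/4) \<le> ln 2) at_top"
    by (rule ev_powr_small) auto
  have e3: "eventually (\<lambda>y. y \<ge> 2 / ((T 1 / CC) * m powr (- pp))) at_top" by simp
  have e1: "eventually (\<lambda>y. y \<ge> 1 / m) at_top" by simp
  show ?thesis using e1 e2 e3 eventually_ge_at_top[of 1]
  proof eventually_elim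
    case (elim y)
    have ypos: "y > 0" using elim by simp
    have my1: "m * y \<ge> 1" using elim m_pos by (simp add: field_simps)
    have lny: "ln y \<ge> 0" using elim by simp
    show ?case
    proof (intro allI impI)
      fix k assume k: "real k \<le> y/2"
      show "qq F k (m*y) \<le> C1 * real k * T (m*y)"
      proof (cases "k = 0")
        case True
        then show ?thesis using my1 by (simp add: qq_0)
      next
        case False
        then have k1: "real k \<ge> 1" by simp
        define l where "l = aa * ln y / y"
        define h where "h = m * y / 2^jj"
        have aam: "aa * m = 2 * (pp + 1)" using m_pos by (simp add: aa_def)
        have aa0: "aa \<ge> 0" using pp_nonneg m_pos by (simp add: aa_def)
        have l0: "l \<ge> 0" "h \<ge> 0" using aa0 lny ypos m_pos by (auto simp: l_def h_def)
        have cu: "qq F k (m*y) \<le> real k * T h + exp (- l * (m*y) + real k * (l * m + l^2 * s2 * exp (l * h)))"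
          by (rule chernoff_up'[OF l0])
        have Th: "T h \<le> CC^jj * T (m*y)" unfolding h_def by (rule CC_pow)
        have lh: "l * h \<le> ln y / 2"
        proof -
          have "l * h = (aa * m) * ln y / 2^jj" using ypos by (simp add: l_def h_def)
          also have "\<dots> = 2 * (pp + 1) * ln y / 2^jj" by (simp add: aam)
          also have "\<dots> \<le> ln y / 2"
          proof -
            have "(4 * (pp + 1)) * ln y \<le> 2^jj * ln y"
              using jj lny by (rule mult_right_mono)
            moreover have "(ln y / 2) * 2^jj = (2^jj * ln y) / 2" by simp
            moreover have "(4 * (pp + 1)) * ln y = 2 * (2 * (pp + 1) * ln y)" by simp
            ultimately have "2 * (pp + 1) * ln y \<le> (ln y / 2) * 2^jj" by linarith
            then show ?thesis by (simp add: pos_divide_le_eq)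
          qed
          finally show ?thesis .
        qed
        have elh: "exp (l * h) \<le> y powr (1/2)"
        proof -
          have "exp (l * h) \<le> exp (ln y / 2)" using lh by simp
          also have "\<dots> = y powr (1/2)" using ypos by (simp add: powr_def)
          finally show ?thesis .
        qed
        have lmy: "l * (m * y) = 2 * (pp + 1) * ln y"
        proof -
          have "l * (m * y) = (aa * m) * ln y" using ypos by (simp add: l_def)
          then show ?thesis by (simp add: aam)
        qed
        have lnb: "(ln y)^2 \<le> 64 * y powr (1/4)"
        proof -
          have "ln y \<le> y powr (1/8) / (1/8)" by (rule ln_powr_bound) (use elim in auto)
          then have "ln y \<le> 8 * y powr (1/8)" by simp
          then have "(ln y)^2 \<le> (8 * y powr (1/8))^2" using lny by (intro power_mono) auto
          also have "\<dots> = 64 * y powr (1/4)"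
            by (simp add: power2_eq_square powr_add[symmetric])
          finally show ?thesis .
        qed
        have "- l * (m*y) + real k * (l * m + l^2 * s2 * exp (l * h))
            = - l * (m*y) + real k * (l * m) + real k * (l^2 * s2 * exp (l * h))" by (simp add: algebra_simps)
        also have "\<dots> \<le> - l * (m*y) + (y/2) * (l * m) + y * (l^2 * s2 * y powr (1/2))"
        proof (intro add_mono order_refl)
          show "real k * (l * m) \<le> y / 2 * (l * m)" using k l0 m_pos by (intro mult_right_mono) auto
          have "real k * (l^2 * s2 * exp (l * h)) \<le> y * (l^2 * s2 * exp (l * h))"
            using k s2_nonneg by (intro mult_right_mono) auto
          also have "\<dots> \<le> y * (l^2 * s2 * y powr (1/2))"
            using elh ypos s2_nonneg by (intro mult_left_mono) auto
          finally show "real k * (l^2 * s2 * exp (l * h)) \<le> y * (l^2 * s2 * y powr (1/2))" .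
        qed
        also have "\<dots> = - (pp + 1) * ln y + (aa^2 * s2) * ((ln y)^2 * (y powr (1/2) / y))"
        proof -
          have "- l * (m*y) + (y/2) * (l * m) = - (l * (m * y)) / 2" by (simp add: algebra_simps)
          also have "\<dots> = - (pp + 1) * ln y" unfolding lmy by (simp add: field_simps)
          finally have a: "- l * (m*y) + (y/2) * (l * m) = - (pp + 1) * ln y" .
          have b: "y * (l^2 * s2 * y powr (1/2)) = (aa^2 * s2) * ((ln y)^2 * (y powr (1/2) / y))"
            using ypos unfolding l_def power2_eq_square by (simp add: divide_simps)
          show ?thesis using a b by simp
        qed
        also have "\<dots> \<le> - (pp + 1) * ln y + (aa^2 * s2) * (64 * y powr (-1/4))"
        proof -
          have "(ln y)^2 * (y powr (1/2) / y) \<le> (64 * y powr (1/4)) * (y powr (1/2) / y)"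
            using lnb ypos by (intro mult_right_mono) auto
          also have "\<dots> = 64 * y powr (-1/4)"
          proof -
            have "y powr (1/4) * y powr (1/2) = y powr (3/4)" by (simp add: powr_add[symmetric])
            moreover have "y powr (3/4) / y = y powr (-1/4)"
            proof -
              have "y powr (3/4 - 1) = y powr (3/4) / y powr 1" by (rule powr_diff)
              then show ?thesis using ypos by simp
            qed
            ultimately show ?thesis by (simp add: field_simps)
          qed
          finally have A: "(ln y)^2 * (y powr (1/2) / y) \<le> 64 * y powr (-1/4)" .
          show ?thesis using s2_nonneg by (intro add_left_mono mult_left_mono A) auto
        qed
        also have "\<dots> \<le> - (pp + 1) * ln y + ln 2" using elim by (simp add: algebra_simps)
        finally have ex: "- l * (m*y) + real k * (l * m + l^2 * s2 * exp (l * h)) \<le> ln 2 - (pp + 1) * ln y"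
          by (simp add: algebra_simps)
        have "exp (- l * (m*y) + real k * (l * m + l^2 * s2 * exp (l * h))) \<le> exp (ln 2 - (pp + 1) * ln y)"
          using ex by simp
        also have "\<dots> = 2 * y powr (- (pp + 1))"
        proof -
          have a: "exp (ln 2 - (pp + 1) * ln y) = 2 * exp (- ((pp + 1) * ln y))"
            by (subst exp_minus) (simp add: exp_diff divide_inverse)
          have b: "y powr (- (pp + 1)) = exp (- ((pp + 1) * ln y))" using ypos by (simp add: powr_def algebra_simps)
          show ?thesis using a b by simp
        qed
        also have "\<dots> = (2 / y) * y powr (- pp)"
        proof -
          have "y powr (- pp + -1) = y powr (- pp) * y powr (-1)" by (rule powr_add)
          moreover have "- pp + -1 = - (pp + 1)" by simp
          ultimately have "y powr (- (pp + 1)) = y powr (- pp) * y powr (-1)" by simp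
          also have "y powr (-1) = 1 / y" using ypos by (simp add: powr_minus_divide)
          finally show ?thesis by simp
        qed
        also have "\<dots> \<le> ((T 1 / CC) * m powr (- pp)) * y powr (- pp)"
        proof (rule mult_right_mono)
          have Q: "(T 1 / CC) * m powr (- pp) > 0" using T1_pos m_pos by (intro mult_pos_pos) auto
          then have Q2: "2 / ((T 1 / CC) * m powr (- pp)) > 0" by (intro divide_pos_pos) auto
          have P: "0 < y * (2 / ((T 1 / CC) * m powr (- pp)))" by (rule mult_pos_pos[OF ypos Q2])
          have "2 / y \<le> 2 / (2 / ((T 1 / CC) * m powr (- pp)))"
            by (rule divide_left_mono[OF _ _ P]) (use elim in auto)
          then show "2 / y \<le> (T 1 / CC) * m powr (- pp)" using T1_pos m_pos by simp
        qed simp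
        also have "\<dots> = (T 1 / CC) * (m * y) powr (- pp)" using ypos m_pos by (simp add: powr_mult)
        also have "\<dots> \<le> T (m * y)" by (rule T_poly_lower[OF my1])
        finally have ee: "exp (- l * (m*y) + real k * (l * m + l^2 * s2 * exp (l * h))) \<le> T (m*y)" .
        have "qq F k (m*y) \<le> real k * (CC^jj * T (m*y)) + T (m*y)"
          using cu ee mult_left_mono[OF Th, of "real k"] by simp
        also have "\<dots> \<le> real k * (CC^jj * T (m*y)) + real k * T (m*y)"
          using k1 T_nonneg[of "m*y"] by (simp add: mult_right_mono[of 1 "real k", simplified])
        also have "\<dots> = C1 * real k * T (m*y)" by (simp add: C1_def algebra_simps)
        finally show ?thesis .
      qed
    qed
  qed
qed

end

definition gG :: "nat pmf \<Rightarrow> real \<Rightarrow> real" where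
  "gG G y = measure_pmf.prob G {k. real k > y}"

definition ET :: "nat pmf \<Rightarrow> real \<Rightarrow> real" where
  "ET G K = measure_pmf.expectation G (\<lambda>k. real k * (if real k > K then 1 else 0))"

lemma gG_nonneg: "gG G y \<ge> 0" by (simp add: gG_def)

lemma int_indG: "integrable (measure_pmf G) (\<lambda>a. if real a > x then 1 else 0 :: real)"
  by (rule int_bnd[where B=1]) auto

lemma int_indG': "integrable (measure_pmf G) (\<lambda>a. if real a \<le> x then 1 else 0 :: real)"
  by (rule int_bnd[where B=1]) auto

lemma E_indG: "measure_pmf.expectation G (\<lambda>a. if real a > h then 1 else 0) = gG G h"
proof -
  have "(\<lambda>a. if real a > h then 1 else 0 :: real) = indicator {a. real a > h}"
    by (auto simp: indicator_def)
  then show ?thesis by (simp add: gG_def)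
qed

lemma int_ET: "integrable (measure_pmf G) real \<Longrightarrow>
   integrable (measure_pmf G) (\<lambda>k. real k * (if real k > K then 1 else 0))"
  by (rule Bochner_Integration.integrable_bound) (auto intro!: AE_pmfI)

lemma int_ET': "integrable (measure_pmf G) real \<Longrightarrow>
   integrable (measure_pmf G) (\<lambda>k. real k * (if real k \<le> K then 1 else 0))"
  by (rule Bochner_Integration.integrable_bound) (auto intro!: AE_pmfI)

lemma ET_nonneg: "ET G K \<ge> 0" unfolding ET_def by (rule integral_nonneg_AE) auto

lemma ET_tendsto: "integrable (measure_pmf G) real \<Longrightarrow> ((\<lambda>K. ET G K) \<longlongrightarrow> 0) at_top"
proof -
  assume int: "integrable (measure_pmf G) real"
  have "((\<lambda>K. measure_pmf.expectation G (\<lambda>k. real k * (if real k > K then 1 else 0)))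
      \<longlongrightarrow> measure_pmf.expectation G (\<lambda>k. 0::real)) at_top"
  proof (rule integral_dominated_convergence_at_top[where w=real])
    show "AE x in measure_pmf G. ((\<lambda>i. real x * (if real x > i then 1 else 0)) \<longlongrightarrow> 0) at_top"
    proof (rule AE_pmfI)
      fix x :: nat
      have "eventually (\<lambda>i. real x * (if real x > i then 1 else 0) = 0) at_top"
        using eventually_ge_at_top[of "real x"] by eventually_elim auto
      then show "((\<lambda>i. real x * (if real x > i then 1 else 0)) \<longlongrightarrow> 0) at_top"
        by (rule tendsto_eventually)
    qed
    show "\<forall>\<^sub>F i in at_top. AE x in measure_pmf G. norm (real x * (if real x > i then 1 else 0)) \<le> real x"
      by (auto intro!: AE_pmfI)
  qed (use int in auto)
  then show ?thesis by (simp add: ET_def)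
qed

lemma E_ET': "integrable (measure_pmf G) real \<Longrightarrow>
  measure_pmf.expectation G (\<lambda>k. real k * (if real k \<le> K then 1 else 0)) =
  measure_pmf.expectation G real - ET G K"
proof -
  assume int: "integrable (measure_pmf G) real"
  have "(\<lambda>k. real k * (if real k \<le> K then 1 else 0)) = (\<lambda>k. real k - real k * (if real k > K then 1 else 0))"
    by auto
  then show ?thesis using int int_ET[OF int] unfolding ET_def
    by (simp add: Bochner_Integration.integral_diff)
qed


lemma int_qq2: "integrable (measure_pmf M) (\<lambda>k. qq F k t)"
  by (rule int_bnd[where B=1]) (simp add: qq_nonneg qq_le1 abs_le_iff order_trans[OF _ qq_le1])

context gwp begin

lemma rho_nonneg: "y \<ge> 0 \<Longrightarrow> rho y \<ge> 0"
  unfolding rho_def by (intro add_nonneg_nonneg mult_nonneg_nonneg T_nonneg) auto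

lemma fixed_all:
  assumes d: "\<delta> > 0"
  shows "eventually (\<lambda>y. \<forall>k. real k \<le> K \<longrightarrow> qq F k (m*y) \<le> (real k + \<delta>) * T (m*y)) at_top"
proof -
  have "eventually (\<lambda>y. \<forall>k\<in>{..nat \<lfloor>K\<rfloor>}. qq F k (m*y) \<le> (real k + \<delta>) * T (m*y)) at_top"
  proof (rule eventually_ball_finite)
    show "\<forall>k\<in>{..nat \<lfloor>K\<rfloor>}. eventually (\<lambda>y. qq F k (m*y) \<le> (real k + \<delta>) * T (m*y)) at_top"
      using ev_compose[OF fl_mult[OF m_pos] qq_upper_fixed[OF d]] by blast
  qed simp
  then show ?thesis
  proof eventually_elim
    case (elim y)
    show ?case
    proof (intro allI impI)
      fix k assume "real k \<le> K"
      then have "k \<le> nat \<lfloor>K\<rfloor>" by linarith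
      then show "qq F k (m*y) \<le> (real k + \<delta>) * T (m*y)" using elim by auto
    qed
  qed
qed

lemma main_upper:
  fixes G :: "nat pmf" and \<mu> C \<epsilon> :: real
  assumes intG: "integrable (measure_pmf G) real"
    and mu: "measure_pmf.expectation G real = \<mu>" and mupos: "\<mu> > 0"
    and h1: "\<And>\<delta>. \<delta> > 0 \<Longrightarrow> eventually (\<lambda>y. gG G (y - y powr be) \<le> (1+\<delta>) * gG G y) at_top"
    and h3: "eventually (\<lambda>y. gG G (y/2) \<le> C * gG G y) at_top" and C: "C \<ge> 0"
    and eps: "\<epsilon> > 0"
  shows "eventually (\<lambda>y. measure_pmf.expectation G (\<lambda>k. qq F k (m*y)) \<le> (1 + \<epsilon>) * (gG G y + \<mu> * T (m*y))) at_top"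
proof -
  define \<delta> where "\<delta> = \<epsilon> * min 1 \<mu> / 4"
  define \<delta>2 where "\<delta>2 = \<epsilon> * \<mu> / (4 * C1)"
  have d: "\<delta> > 0" "\<delta> \<le> \<epsilon>/4" "\<delta> \<le> \<epsilon> * \<mu> / 4" using eps mupos by (auto simp: \<delta>_def min_def)
  have d2: "\<delta>2 > 0" "C1 * \<delta>2 = \<epsilon> * \<mu> / 4" using eps mupos C1_pos by (auto simp: \<delta>2_def)
  obtain K where K: "ET G K \<le> \<delta>2" "K \<ge> 0"
  proof -
    have "eventually (\<lambda>K. ET G K < \<delta>2) at_top" using order_tendstoD(2)[OF ET_tendsto[OF intG] d2(1)] .
    then have "eventually (\<lambda>K. ET G K < \<delta>2 \<and> K \<ge> 0) at_top" using eventually_ge_at_top[of 0] by eventually_elim auto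
    then obtain N where "\<forall>n\<ge>N. ET G n < \<delta>2 \<and> n \<ge> 0" by (auto simp: eventually_at_top_linorder)
    then show ?thesis using that[of N] by auto
  qed
  have u4: "eventually (\<lambda>y. rho y \<le> \<epsilon> / (2 * (C + 1))) at_top" by (rule rho_small) (use eps C in auto)
  show ?thesis using fixed_all[OF d(1), of K] small_k_bound eventually_ge_at_top[of 1] u4 h1[OF d(1)] h3
  proof eventually_elim
    case (elim y)
    let ?T = "T (m*y)"
    let ?g = "gG G"
    have Tn: "?T \<ge> 0" by (rule T_nonneg)
    have r0: "rho y \<ge> 0" using elim by (intro rho_nonneg) auto
    define b where "b = (\<lambda>k. (if real k > y - y powr be then 1 else 0) + rho y * (if real k > y/2 then 1 else 0)
        + (C1 * ?T) * (real k * (if real k > K then 1 else 0)) + ?T * (real k + \<delta>))"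
    have pt: "qq F k (m*y) \<le> b k" for k
    proof -
      have nn: "0 \<le> (if real k > y - y powr be then 1 else 0::real)" "0 \<le> rho y * (if real k > y/2 then 1 else 0)"
        "0 \<le> (C1 * ?T) * (real k * (if real k > K then 1 else 0))" "0 \<le> ?T * (real k + \<delta>)"
        using r0 Tn C1_pos d by (auto intro!: mult_nonneg_nonneg)
      consider "real k \<le> K" | "K < real k" "real k \<le> y/2" | "y/2 < real k" "real k \<le> y - y powr be"
        | "real k > y - y powr be" by linarith
      then show ?thesis
      proof cases
        case 1 then have "qq F k (m*y) \<le> (real k + \<delta>) * ?T" using elim(1) by blast
        then show ?thesis using nn unfolding b_def by (simp add: mult.commute)
      next
        case 2 then have "qq F k (m*y) \<le> C1 * real k * ?T" using elim(2) by blast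
        then show ?thesis using nn 2 unfolding b_def by (simp add: mult.commute mult.left_commute)
      next
        case 3 then have "qq F k (m*y) \<le> rho y" using elim(3) by (intro mid_bound) auto
        then show ?thesis using nn 3 unfolding b_def by simp
      next
        case 4 then show ?thesis using nn qq_le1[of F k "m*y"] unfolding b_def by simp
      qed
    qed
    have i1: "integrable (measure_pmf G) (\<lambda>k. (if real k > y - y powr be then 1 else 0::real))" by (rule int_indG)
    have i2: "integrable (measure_pmf G) (\<lambda>k. rho y * (if real k > y/2 then 1 else 0::real))"
      by (intro Bochner_Integration.integrable_mult_right int_indG)
    have i3: "integrable (measure_pmf G) (\<lambda>k. (C1 * ?T) * (real k * (if real k > K then 1 else 0)))"
      by (intro Bochner_Integration.integrable_mult_right int_ET intG)
    have i4: "integrable (measure_pmf G) (\<lambda>k. ?T * (real k + \<delta>))"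
      by (intro Bochner_Integration.integrable_mult_right Bochner_Integration.integrable_add intG measure_pmf.integrable_const)
    have i12: "integrable (measure_pmf G) (\<lambda>k. (if real k > y - y powr be then 1 else 0::real) + rho y * (if real k > y/2 then 1 else 0))"
      by (rule Bochner_Integration.integrable_add[OF i1 i2])
    have i123: "integrable (measure_pmf G) (\<lambda>k. (if real k > y - y powr be then 1 else 0::real) + rho y * (if real k > y/2 then 1 else 0)
        + (C1 * ?T) * (real k * (if real k > K then 1 else 0)))"
      by (rule Bochner_Integration.integrable_add[OF i12 i3])
    have ib: "integrable (measure_pmf G) b" unfolding b_def by (rule Bochner_Integration.integrable_add[OF i123 i4])
    have E4: "measure_pmf.expectation G (\<lambda>k. real k + \<delta>) = \<mu> + \<delta>"
      using intG mu by (simp add: Bochner_Integration.integral_add measure_pmf.integrable_const)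
    have "measure_pmf.expectation G (\<lambda>k. qq F k (m*y)) \<le> measure_pmf.expectation G b"
      by (rule integral_mono[OF int_qq2 ib]) (rule pt)
    also have "\<dots> = ?g (y - y powr be) + rho y * ?g (y/2) + (C1 * ?T) * ET G K + ?T * (\<mu> + \<delta>)"
      unfolding b_def
      by (simp only: Bochner_Integration.integral_add[OF i123 i4] Bochner_Integration.integral_add[OF i12 i3]
          Bochner_Integration.integral_add[OF i1 i2] Bochner_Integration.integral_mult_right_zero E_indG E4 ET_def)
    also have "\<dots> \<le> (1 + \<delta>) * ?g y + (\<epsilon> / (2 * (C + 1))) * (C * ?g y) + (C1 * ?T) * \<delta>2 + ?T * (\<mu> + \<delta>)"
    proof -
      have "rho y * ?g (y/2) \<le> (\<epsilon> / (2 * (C + 1))) * (C * ?g y)"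
        using elim r0 by (intro mult_mono) (auto simp: gG_nonneg)
      moreover have "(C1 * ?T) * ET G K \<le> (C1 * ?T) * \<delta>2"
        using K C1_pos Tn by (intro mult_left_mono) auto
      ultimately show ?thesis using elim by linarith
    qed
    also have "\<dots> \<le> (1 + \<epsilon>) * (?g y + \<mu> * ?T)"
    proof -
      have a: "(\<epsilon> / (2 * (C + 1))) * (C * ?g y) \<le> (\<epsilon> / 2) * ?g y"
      proof -
        have "(\<epsilon> / (2 * (C + 1))) * C \<le> \<epsilon> / 2" using C eps by (simp add: field_simps)
        then show ?thesis using gG_nonneg[of G y] by (metis mult.assoc mult_right_mono)
      qed
      have b1: "\<delta> * ?g y \<le> (\<epsilon>/4) * ?g y" using d gG_nonneg[of G y] by (intro mult_right_mono) auto
      have c: "(C1 * ?T) * \<delta>2 = (\<epsilon> * \<mu> / 4) * ?T" using d2 by (simp add: algebra_simps)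
      have e: "?T * \<delta> \<le> ?T * (\<epsilon> * \<mu> / 4)" using d Tn by (intro mult_left_mono) auto
      have "(1 + \<delta>) * ?g y + (\<epsilon> / (2 * (C + 1))) * (C * ?g y) + (C1 * ?T) * \<delta>2 + ?T * (\<mu> + \<delta>)
          = ?g y + \<delta> * ?g y + (\<epsilon> / (2 * (C + 1))) * (C * ?g y) + (\<epsilon> * \<mu> / 4) * ?T + ?T * \<mu> + ?T * \<delta>"
        using c by (simp add: algebra_simps)
      also have "\<dots> \<le> ?g y + (\<epsilon>/4) * ?g y + (\<epsilon> / 2) * ?g y + (\<epsilon> * \<mu> / 4) * ?T + ?T * \<mu> + ?T * (\<epsilon> * \<mu> / 4)"
        using a b1 e by linarith
      also have "\<dots> \<le> (1 + \<epsilon>) * (?g y + \<mu> * ?T)"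
      proof -
        have "(\<epsilon>/4) * ?g y + (\<epsilon> / 2) * ?g y \<le> \<epsilon> * ?g y" using eps gG_nonneg[of G y] by (simp add: algebra_simps)
        moreover have "(\<epsilon> * \<mu> / 4) * ?T + ?T * (\<epsilon> * \<mu> / 4) \<le> \<epsilon> * (\<mu> * ?T)"
          using eps mupos Tn by (simp add: algebra_simps)
        ultimately show ?thesis by (simp add: algebra_simps)
      qed
      finally show ?thesis .
    qed
    finally show ?case .
  qed
qed

end

context gwp begin

lemma main_lower:
  fixes G :: "nat pmf" and \<mu> \<epsilon> :: real
  assumes intG: "integrable (measure_pmf G) real"
    and mu: "measure_pmf.expectation G real = \<mu>" and mupos: "\<mu> > 0"
    and h2: "\<And>\<delta>. \<delta> > 0 \<Longrightarrow> eventually (\<lambda>y. gG G (y + y powr be) \<ge> (1-\<delta>) * gG G y) at_top"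
    and eps: "\<epsilon> > 0"
  shows "eventually (\<lambda>y. measure_pmf.expectation G (\<lambda>k. qq F k (m*y)) \<ge> (1 - \<epsilon>) * (gG G y + \<mu> * T (m*y))) at_top"
proof -
  define \<delta> where "\<delta> = min 1 \<epsilon> / 4"
  define \<delta>2 where "\<delta>2 = \<epsilon> * \<mu> / 4"
  have d: "\<delta> > 0" "\<delta> \<le> \<epsilon>/4" "\<delta> \<le> 1/4" using eps by (auto simp: \<delta>_def min_def)
  have d2: "\<delta>2 > 0" using eps mupos by (auto simp: \<delta>2_def)
  obtain K where K: "ET G K \<le> \<delta>2" "K \<ge> 0"
  proof -
    have "eventually (\<lambda>K. ET G K < \<delta>2) at_top" using order_tendstoD(2)[OF ET_tendsto[OF intG] d2(1)] .
    then have "eventually (\<lambda>K. ET G K < \<delta>2 \<and> K \<ge> 0) at_top" using eventually_ge_at_top[of 0] by eventually_elim auto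
    then obtain N where "\<forall>n\<ge>N. ET G n < \<delta>2 \<and> n \<ge> 0" by (auto simp: eventually_at_top_linorder)
    then show ?thesis using that[of N] by auto
  qed
  have l2: "eventually (\<lambda>y. (K + 1) * T (m*y) \<le> \<delta>) at_top"
  proof -
    have "eventually (\<lambda>u. T u \<le> \<delta> / (K + 1)) at_top" by (rule ev_T_small) (use d K in simp)
    then have "eventually (\<lambda>y. T (m*y) \<le> \<delta> / (K + 1)) at_top" by (rule ev_compose[OF fl_mult[OF m_pos]])
    then show ?thesis
    proof eventually_elim
      case (elim y)
      then have "(K + 1) * T (m*y) \<le> (K + 1) * (\<delta> / (K + 1))" using K by (intro mult_left_mono) auto
      then show ?case using K by simp
    qed
  qed
  show ?thesis using low_tail[OF d(1)] l2 eventually_ge_at_top[of K] eventually_ge_at_top[of 0] h2[OF d(1)]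
  proof eventually_elim
    case (elim y)
    let ?T = "T (m*y)"
    let ?g = "gG G"
    have Tn: "?T \<ge> 0" by (rule T_nonneg)
    define b where "b = (\<lambda>k. (1 - \<delta>) * (if real k > y + y powr be then 1 else 0)
        + ((1 - \<delta>) * ?T) * (real k * (if real k \<le> K then 1 else 0)))"
    have pt: "b k \<le> qq F k (m*y)" for k
    proof -
      consider "real k > y + y powr be" | "real k \<le> K" | "K < real k" "real k \<le> y + y powr be" by linarith
      then show ?thesis
      proof cases
        case 1
        then have "\<not> real k \<le> K" using elim(3) powr_ge_zero[of y be] by linarith
        then show ?thesis using 1 elim(1) unfolding b_def by auto
      next
        case 2
        have n1: "\<not> real k > y + y powr be" using 2 elim(3) powr_ge_zero[of y be] by linarith
        have "real k * ?T \<le> (K + 1) * ?T" by (rule mult_right_mono) (use 2 Tn in auto)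
        then have kT: "real k * ?T \<le> \<delta>" using elim(2) by linarith
        have "real k * ?T * (1 - \<delta>) \<le> real k * ?T * (1 - real k * ?T)"
          using kT Tn by (intro mult_left_mono) auto
        also have "\<dots> \<le> qq F k (m*y)" using qq_lower[of k "m*y"] by simp
        finally show ?thesis using n1 2 unfolding b_def by (simp add: algebra_simps)
      next
        case 3 then show ?thesis unfolding b_def by (simp add: qq_nonneg)
      qed
    qed
    have i1: "integrable (measure_pmf G) (\<lambda>k. (1 - \<delta>) * (if real k > y + y powr be then 1 else 0::real))"
      by (intro Bochner_Integration.integrable_mult_right int_indG)
    have i2: "integrable (measure_pmf G) (\<lambda>k. ((1 - \<delta>) * ?T) * (real k * (if real k \<le> K then 1 else 0)))"
      by (intro Bochner_Integration.integrable_mult_right int_ET' intG)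
    have ib: "integrable (measure_pmf G) b" unfolding b_def by (rule Bochner_Integration.integrable_add[OF i1 i2])
    have "(1 - \<delta>) * ?g (y + y powr be) + ((1 - \<delta>) * ?T) * (\<mu> - ET G K) = measure_pmf.expectation G b"
      unfolding b_def
      by (simp only: Bochner_Integration.integral_add[OF i1 i2]
          Bochner_Integration.integral_mult_right_zero E_indG E_ET'[OF intG] mu)
    also have "\<dots> \<le> measure_pmf.expectation G (\<lambda>k. qq F k (m*y))"
      by (rule integral_mono[OF ib int_qq2]) (rule pt)
    finally have A: "(1 - \<delta>) * ?g (y + y powr be) + ((1 - \<delta>) * ?T) * (\<mu> - ET G K)
       \<le> measure_pmf.expectation G (\<lambda>k. qq F k (m*y))" .
    have B1: "(1 - \<delta>) * ((1 - \<delta>) * ?g y) \<le> (1 - \<delta>) * ?g (y + y powr be)"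
      using elim(5) d by (intro mult_left_mono) auto
    have B2: "(1 - \<epsilon>) * ?g y \<le> (1 - \<delta>) * ((1 - \<delta>) * ?g y)"
    proof -
      have "(1 - \<delta>) * (1 - \<delta>) = 1 - 2 * \<delta> + \<delta> * \<delta>" by (simp add: algebra_simps)
      moreover have "\<delta> * \<delta> \<ge> 0" by simp
      ultimately have "(1 - \<delta>) * (1 - \<delta>) \<ge> 1 - \<epsilon>" using d by linarith
      then show ?thesis using gG_nonneg[of G y] by (metis mult.assoc mult_right_mono)
    qed
    have B3: "(1 - \<epsilon>) * (\<mu> * ?T) \<le> ((1 - \<delta>) * ?T) * (\<mu> - ET G K)"
    proof -
      have "(1 - \<delta>) * (\<mu> - ET G K) = \<mu> - ET G K - \<delta> * \<mu> + \<delta> * ET G K" by (simp add: algebra_simps)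
      also have "\<dots> \<ge> \<mu> - \<delta>2 - (\<epsilon>/4) * \<mu>"
      proof -
        have "\<delta> * \<mu> \<le> (\<epsilon>/4) * \<mu>" using d mupos by (intro mult_right_mono) auto
        moreover have "\<delta> * ET G K \<ge> 0" using d ET_nonneg[of G K] by simp
        ultimately show ?thesis using K by linarith
      qed
      finally have X: "(1 - \<delta>) * (\<mu> - ET G K) \<ge> \<mu> - \<delta>2 - (\<epsilon>/4) * \<mu>" .
      have "\<epsilon> * \<mu> \<ge> 0" using eps mupos by simp
      moreover have "\<delta>2 = \<epsilon> * \<mu> / 4" "(\<epsilon>/4) * \<mu> = \<epsilon> * \<mu> / 4" "(1 - \<epsilon>) * \<mu> = \<mu> - \<epsilon> * \<mu>"
        by (auto simp: \<delta>2_def algebra_simps)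
      ultimately have "(1 - \<delta>) * (\<mu> - ET G K) \<ge> (1 - \<epsilon>) * \<mu>" using X by linarith
      then have "?T * ((1 - \<epsilon>) * \<mu>) \<le> ?T * ((1 - \<delta>) * (\<mu> - ET G K))" using Tn by (intro mult_left_mono)
      then show ?thesis by (simp add: algebra_simps)
    qed
    have "(1 - \<epsilon>) * (?g y + \<mu> * ?T) = (1 - \<epsilon>) * ?g y + (1 - \<epsilon>) * (\<mu> * ?T)" by (simp add: algebra_simps)
    then show ?case using A B1 B2 B3 by linarith
  qed
qed

lemma main_step:
  fixes G :: "nat pmf" and \<mu> C :: real
  assumes intG: "integrable (measure_pmf G) real"
    and mu: "measure_pmf.expectation G real = \<mu>" and mupos: "\<mu> > 0"
    and h1: "\<And>\<delta>. \<delta> > 0 \<Longrightarrow> eventually (\<lambda>y. gG G (y - y powr be) \<le> (1+\<delta>) * gG G y) at_top"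
    and h2: "\<And>\<delta>. \<delta> > 0 \<Longrightarrow> eventually (\<lambda>y. gG G (y + y powr be) \<ge> (1-\<delta>) * gG G y) at_top"
    and h3: "eventually (\<lambda>y. gG G (y/2) \<le> C * gG G y) at_top" and C: "C \<ge> 0"
    and eps: "\<epsilon> > 0"
  shows "eventually (\<lambda>y. \<bar>measure_pmf.expectation G (\<lambda>k. qq F k (m*y)) - (gG G y + \<mu> * T (m*y))\<bar>
            \<le> \<epsilon> * (gG G y + \<mu> * T (m*y))) at_top"
proof -
  have U: "eventually (\<lambda>y. measure_pmf.expectation G (\<lambda>k. qq F k (m*y)) \<le> (1 + \<epsilon>) * (gG G y + \<mu> * T (m*y))) at_top"
    by (rule main_upper[OF intG mu mupos _ h3 C eps]) (rule h1)
  have L: "eventually (\<lambda>y. measure_pmf.expectation G (\<lambda>k. qq F k (m*y)) \<ge> (1 - \<epsilon>) * (gG G y + \<mu> * T (m*y))) at_top"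
    by (rule main_lower[OF intG mu mupos _ eps]) (rule h2)
  show ?thesis using U L by eventually_elim (simp add: abs_le_iff algebra_simps)
qed

end

context gwp begin

definition AA :: "nat \<Rightarrow> real \<Rightarrow> real" where
  "AA n x = (\<Sum>i<n. m^i * T (m^(i+1) * x))"

lemma AA_nonneg: "AA n x \<ge> 0" unfolding AA_def by (intro sum_nonneg mult_nonneg_nonneg T_nonneg) (use m_pos in auto)

lemma AA_pos: "n \<ge> 1 \<Longrightarrow> AA n x > 0"
proof -
  assume n: "n \<ge> 1"
  have "AA n x \<ge> m^0 * T (m^(0+1) * x)" unfolding AA_def
    by (rule member_le_sum) (use n m_pos in \<open>auto intro!: mult_nonneg_nonneg T_nonneg\<close>)
  then show ?thesis using T_pos[of "m * x"] by simp
qed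

lemma AA_Suc: "AA (Suc n) x = AA n x + m^n * T (m^(n+1) * x)" by (simp add: AA_def)

lemma AA_scaled: "AA n (z / m^n) = (\<Sum>i<n. m^i * T ((m^(i+1) / m^n) * z))"
  unfolding AA_def by simp

lemma AA_up:
  assumes d: "\<delta> > 0"
  shows "eventually (\<lambda>y. AA n ((y - y powr be) / m^n) \<le> (1 + \<delta>) * AA n (y / m^n)) at_top"
proof -
  have "eventually (\<lambda>y. \<forall>i\<in>{..<n}. T ((m^(i+1) / m^n) * (y - y powr be)) \<le> (1 + \<delta>) * T ((m^(i+1) / m^n) * y)) at_top"
  proof (rule eventually_ball_finite)
    show "\<forall>i\<in>{..<n}. eventually (\<lambda>y. T ((m^(i+1) / m^n) * (y - y powr be)) \<le> (1 + \<delta>) * T ((m^(i+1) / m^n) * y)) at_top"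
      by (intro ballI ins_up[OF d]) (use m_pos in simp)
  qed simp
  then show ?thesis
  proof eventually_elim
    case (elim y)
    have "AA n ((y - y powr be) / m^n) = (\<Sum>i<n. m^i * T ((m^(i+1) / m^n) * (y - y powr be)))" by (rule AA_scaled)
    also have "\<dots> \<le> (\<Sum>i<n. m^i * ((1 + \<delta>) * T ((m^(i+1) / m^n) * y)))"
      using elim m_pos by (intro sum_mono mult_left_mono) auto
    also have "\<dots> = (1 + \<delta>) * AA n (y / m^n)" by (simp add: AA_scaled sum_distrib_left algebra_simps)
    finally show ?case .
  qed
qed

lemma AA_lo:
  assumes d: "\<delta> > 0"
  shows "eventually (\<lambda>y. AA n ((y + y powr be) / m^n) \<ge> (1 - \<delta>) * AA n (y / m^n)) at_top"
proof -
  have "eventually (\<lambda>y. \<forall>i\<in>{..<n}. T ((m^(i+1) / m^n) * (y + y powr be)) \<ge> (1 - \<delta>) * T ((m^(i+1) / m^n) * y)) at_top"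
  proof (rule eventually_ball_finite)
    show "\<forall>i\<in>{..<n}. eventually (\<lambda>y. T ((m^(i+1) / m^n) * (y + y powr be)) \<ge> (1 - \<delta>) * T ((m^(i+1) / m^n) * y)) at_top"
      by (intro ballI ins_lo[OF d]) (use m_pos in simp)
  qed simp
  then show ?thesis
  proof eventually_elim
    case (elim y)
    have "(1 - \<delta>) * AA n (y / m^n) = (\<Sum>i<n. m^i * ((1 - \<delta>) * T ((m^(i+1) / m^n) * y)))"
      by (simp add: AA_scaled sum_distrib_left algebra_simps)
    also have "\<dots> \<le> (\<Sum>i<n. m^i * T ((m^(i+1) / m^n) * (y + y powr be)))"
      using elim m_pos by (intro sum_mono mult_left_mono) auto
    also have "\<dots> = AA n ((y + y powr be) / m^n)" by (rule AA_scaled[symmetric])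
    finally show ?case .
  qed
qed

lemma AA_half: "AA n ((y/2) / m^n) \<le> CC * AA n (y / m^n)"
proof -
  have "AA n ((y/2) / m^n) = (\<Sum>i<n. m^i * T ((m^(i+1) / m^n) * (y/2)))" by (rule AA_scaled)
  also have "\<dots> \<le> (\<Sum>i<n. m^i * (CC * T ((m^(i+1) / m^n) * y)))"
  proof (intro sum_mono mult_left_mono)
    fix i
    have "T (((m^(i+1) / m^n) * y) / 2) \<le> CC * T ((m^(i+1) / m^n) * y)" by (rule CC)
    then show "T ((m^(i+1) / m^n) * (y/2)) \<le> CC * T ((m^(i+1) / m^n) * y)" by (simp add: mult.assoc)
    show "0 \<le> m^i" using m_pos by simp
  qed
  also have "\<dots> = CC * AA n (y / m^n)" by (simp add: AA_scaled sum_distrib_left algebra_simps)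
  finally show ?thesis .
qed

lemma transfer_up:
  fixes g Bf \<phi> :: "real \<Rightarrow> real"
  assumes aeq: "\<And>\<epsilon>. \<epsilon> > 0 \<Longrightarrow> eventually (\<lambda>y. \<bar>g y - Bf y\<bar> \<le> \<epsilon> * Bf y) at_top"
    and B0: "\<And>y. Bf y \<ge> 0"
    and Bup: "\<And>\<delta>. \<delta> > 0 \<Longrightarrow> eventually (\<lambda>y. Bf (\<phi> y) \<le> (1 + \<delta>) * Bf y) at_top"
    and fl: "filterlim \<phi> at_top at_top"
    and d: "\<delta> > 0"
  shows "eventually (\<lambda>y. g (\<phi> y) \<le> (1 + \<delta>) * g y) at_top"
proof -
  define \<epsilon> where "\<epsilon> = \<delta> / (4 + \<delta>)"
  have e: "\<epsilon> > 0" "\<epsilon> \<le> 1" "\<epsilon> * (4 + \<delta>) = \<delta>" using d by (auto simp: \<epsilon>_def field_simps)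
  show ?thesis using ev_compose[OF fl aeq[OF e(1)]] aeq[OF e(1)] Bup[OF e(1)]
  proof eventually_elim
    case (elim y)
    have a: "g (\<phi> y) \<le> (1 + \<epsilon>) * Bf (\<phi> y)" using elim(1) by (simp add: abs_le_iff algebra_simps)
    have b: "(1 + \<epsilon>) * Bf (\<phi> y) \<le> (1 + \<epsilon>) * ((1 + \<epsilon>) * Bf y)" using elim(3) e by (intro mult_left_mono) auto
    have c: "(1 - \<epsilon>) * Bf y \<le> g y" using elim(2) by (simp add: abs_le_iff algebra_simps)
    have k: "(1 + \<epsilon>) * (1 + \<epsilon>) \<le> (1 + \<delta>) * (1 - \<epsilon>)"
    proof -
      have "(1 + \<delta>) * (1 - \<epsilon>) = 1 + \<delta> - \<epsilon> * (1 + \<delta>)" by (simp add: algebra_simps)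
      also have "\<dots> = 1 + 3 * \<epsilon>" using e(3) by (simp add: algebra_simps)
      finally have "(1 + \<delta>) * (1 - \<epsilon>) = 1 + 3 * \<epsilon>" .
      moreover have "(1 + \<epsilon>) * (1 + \<epsilon>) = 1 + 2 * \<epsilon> + \<epsilon> * \<epsilon>" by (simp add: algebra_simps)
      moreover have "\<epsilon> * \<epsilon> \<le> \<epsilon> * 1" using e by (intro mult_left_mono) auto
      ultimately show ?thesis by linarith
    qed
    have "(1 + \<epsilon>) * ((1 + \<epsilon>) * Bf y) = ((1 + \<epsilon>) * (1 + \<epsilon>)) * Bf y" by simp
    also have "\<dots> \<le> ((1 + \<delta>) * (1 - \<epsilon>)) * Bf y" using k B0[of y] by (intro mult_right_mono) auto
    also have "\<dots> = (1 + \<delta>) * ((1 - \<epsilon>) * Bf y)" by simp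
    also have "\<dots> \<le> (1 + \<delta>) * g y" using c d by (intro mult_left_mono) auto
    finally show ?case using a b by linarith
  qed
qed

lemma transfer_lo:
  fixes g Bf \<phi> :: "real \<Rightarrow> real"
  assumes aeq: "\<And>\<epsilon>. \<epsilon> > 0 \<Longrightarrow> eventually (\<lambda>y. \<bar>g y - Bf y\<bar> \<le> \<epsilon> * Bf y) at_top"
    and B0: "\<And>y. Bf y \<ge> 0"
    and Blo: "\<And>\<delta>. \<delta> > 0 \<Longrightarrow> eventually (\<lambda>y. Bf (\<phi> y) \<ge> (1 - \<delta>) * Bf y) at_top"
    and fl: "filterlim \<phi> at_top at_top"
    and d: "\<delta> > 0"
  shows "eventually (\<lambda>y. g (\<phi> y) \<ge> (1 - \<delta>) * g y) at_top"
proof -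
  define \<epsilon> where "\<epsilon> = \<delta> / (4 + \<delta>)"
  have e: "\<epsilon> > 0" "\<epsilon> \<le> 1" "\<epsilon> * (4 + \<delta>) = \<delta>" using d by (auto simp: \<epsilon>_def field_simps)
  show ?thesis using ev_compose[OF fl aeq[OF e(1)]] aeq[OF e(1)] Blo[OF e(1)]
  proof eventually_elim
    case (elim y)
    have a: "(1 - \<epsilon>) * Bf (\<phi> y) \<le> g (\<phi> y)" using elim(1) by (simp add: abs_le_iff algebra_simps)
    have b: "(1 - \<epsilon>) * ((1 - \<epsilon>) * Bf y) \<le> (1 - \<epsilon>) * Bf (\<phi> y)" using elim(3) e by (intro mult_left_mono) auto
    have c: "g y \<le> (1 + \<epsilon>) * Bf y" using elim(2) by (simp add: abs_le_iff algebra_simps)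
    have gn: "g (\<phi> y) \<ge> 0"
    proof -
      have "(1 - \<epsilon>) * Bf (\<phi> y) \<ge> 0" using e B0 by simp
      then show ?thesis using a by linarith
    qed
    show ?case
    proof (cases "\<delta> \<le> 1")
      case False
      have "(1 - \<delta>) * g y \<le> 0"
      proof -
        have "(1 - \<epsilon>) * Bf y \<ge> 0" using e B0[of y] by simp
        have "(1 - \<epsilon>) * Bf y \<le> g y" using elim(2) by (simp add: abs_le_iff algebra_simps)
        have "g y \<ge> 0" using \<open>(1 - \<epsilon>) * Bf y \<ge> 0\<close> \<open>(1 - \<epsilon>) * Bf y \<le> g y\<close> by linarith
        then show ?thesis using False by (simp add: mult_nonpos_nonneg)
      qed
      then show ?thesis using gn by linarith
    next
      case True
      have k: "(1 - \<delta>) * (1 + \<epsilon>) \<le> (1 - \<epsilon>) * (1 - \<epsilon>)"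
      proof -
        have eqd: "\<delta> - 4 * \<epsilon> - \<delta> * \<epsilon> = 0" using e(3) by (simp add: algebra_simps)
        have id: "(1 - \<epsilon>) * (1 - \<epsilon>) - (1 - \<delta>) * (1 + \<epsilon>) = (\<delta> - 4 * \<epsilon> - \<delta> * \<epsilon>) + (\<epsilon> + \<epsilon> * \<epsilon> + 2 * (\<delta> * \<epsilon>))"
          by (simp add: algebra_simps)
        have nn: "\<epsilon> + \<epsilon> * \<epsilon> + 2 * (\<delta> * \<epsilon>) \<ge> 0" using e d by simp
        show ?thesis using id eqd nn by linarith
      qed
      have "(1 - \<delta>) * g y \<le> (1 - \<delta>) * ((1 + \<epsilon>) * Bf y)" using c True by (intro mult_left_mono) auto
      also have "\<dots> = ((1 - \<delta>) * (1 + \<epsilon>)) * Bf y" by simp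
      also have "\<dots> \<le> ((1 - \<epsilon>) * (1 - \<epsilon>)) * Bf y" using k B0[of y] by (intro mult_right_mono) auto
      also have "\<dots> = (1 - \<epsilon>) * ((1 - \<epsilon>) * Bf y)" by simp
      finally show ?thesis using a b by linarith
    qed
  qed
qed

lemma transfer_half:
  fixes g Bf :: "real \<Rightarrow> real"
  assumes aeq: "\<And>\<epsilon>. \<epsilon> > 0 \<Longrightarrow> eventually (\<lambda>y. \<bar>g y - Bf y\<bar> \<le> \<epsilon> * Bf y) at_top"
    and B0: "\<And>y. Bf y \<ge> 0"
    and Bh: "\<And>y. Bf (y/2) \<le> CC * Bf y"
  shows "eventually (\<lambda>y. g (y/2) \<le> (3 * CC) * g y) at_top"
proof -
  have h: "(1/2::real) > 0" by simp
  show ?thesis using ev_compose[OF fl_mult[OF h] aeq[OF h]] aeq[OF h]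
  proof eventually_elim
    case (elim y)
    have e1: "\<bar>g (y/2) - Bf (y/2)\<bar> \<le> 1/2 * Bf (y/2)" using elim(1) by simp
    have a: "g (y/2) \<le> (3/2) * Bf (y/2)" using e1 unfolding abs_le_iff by linarith
    have b: "(3/2) * Bf (y/2) \<le> (3/2) * (CC * Bf y)" using Bh[of y] by simp
    have c: "Bf y \<le> 2 * g y" using elim(2) unfolding abs_le_iff by linarith
    have "(3/2) * (CC * Bf y) \<le> (3/2) * (CC * (2 * g y))" using c CC_ge1 by (intro mult_left_mono) auto
    then show ?case using a b by (simp add: algebra_simps)
  qed
qed

end

lemma gw1: "gw F (Suc 0) = F"
  by (simp add: bind_return_pmf map_return_pmf bind_return_pmf')

lemma aeq_imp_asymp:
  fixes f g :: "real \<Rightarrow> real"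
  assumes aeq: "\<And>\<epsilon>. \<epsilon> > 0 \<Longrightarrow> eventually (\<lambda>x. \<bar>f x - g x\<bar> \<le> \<epsilon> * g x) at_top"
    and pos: "\<And>x. g x > 0"
  shows "f \<sim>[at_top] g"
proof (rule asymp_equivI')
  show "((\<lambda>x. f x / g x) \<longlongrightarrow> 1) at_top"
  proof (rule tendstoI)
    fix e :: real assume e: "e > 0"
    have ev: "eventually (\<lambda>x. \<bar>f x - g x\<bar> \<le> e/2 * g x) at_top" by (rule aeq) (use e in simp)
    show "eventually (\<lambda>x. dist (f x / g x) 1 < e) at_top" using ev
    proof eventually_elim
      case (elim x)
      have "dist (f x / g x) 1 = \<bar>f x - g x\<bar> / g x"
        using pos[of x] by (simp add: dist_real_def field_simps abs_div)
      also have "\<dots> \<le> (e/2 * g x) / g x" using elim pos[of x] by (intro divide_right_mono) auto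
      also have "\<dots> < e" using pos[of x] e by simp
      finally show ?case .
    qed
  qed
qed

context gwp begin

lemma nn_real_F: "(\<integral>\<^sup>+x. ennreal (real x) \<partial>measure_pmf F) = ennreal m"
  using nn_integral_eq_integral[OF int_real] by (simp add: m_def')

lemma nn_conv: "(\<integral>\<^sup>+x. ennreal (real x) \<partial>measure_pmf (conv_pow F k)) = ennreal (real k * m)"
proof (induction k)
  case 0 then show ?case by simp
next
  case (Suc k)
  have "(\<integral>\<^sup>+x. ennreal (real x) \<partial>measure_pmf (conv_pow F (Suc k)))
      = (\<integral>\<^sup>+a. (\<integral>\<^sup>+b. ennreal (real a) + ennreal (real b) \<partial>measure_pmf (conv_pow F k)) \<partial>measure_pmf F)"
    by (simp add: ennreal_plus[symmetric] del: ennreal_plus)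
  also have "\<dots> = (\<integral>\<^sup>+a. ennreal (real a) + ennreal (real k * m) \<partial>measure_pmf F)"
    by (simp add: nn_integral_add Suc measure_pmf.emeasure_space_1)
  also have "\<dots> = ennreal m + ennreal (real k * m)"
    by (simp add: nn_integral_add nn_real_F measure_pmf.emeasure_space_1)
  also have "\<dots> = ennreal (real (Suc k) * m)"
    using m_pos by (simp add: ennreal_plus[symmetric] algebra_simps del: ennreal_plus)
  finally show ?case .
qed

lemma nn_gw: "(\<integral>\<^sup>+x. ennreal (real x) \<partial>measure_pmf (gw F n)) = ennreal (m^n)"
proof (induction n)
  case 0 then show ?case by simp
next
  case (Suc n)
  have "(\<integral>\<^sup>+x. ennreal (real x) \<partial>measure_pmf (gw F (Suc n)))
      = (\<integral>\<^sup>+k. ennreal m * ennreal (real k) \<partial>measure_pmf (gw F n))"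
    using m_pos by (simp add: nn_conv ennreal_mult mult.commute)
  also have "\<dots> = ennreal m * ennreal (m^n)" by (simp add: nn_integral_cmult Suc)
  also have "\<dots> = ennreal (m^Suc n)" using m_pos by (simp add: ennreal_mult[symmetric])
  finally show ?case .
qed

lemma int_gw: "integrable (measure_pmf (gw F n)) real"
  by (rule integrableI_nn_integral_finite[where x="m^n"]) (auto simp: nn_gw)

lemma E_gw: "measure_pmf.expectation (gw F n) real = m^n"
  using m_pos by (subst integral_eq_nn_integral) (auto simp: nn_gw)

lemma gG_Suc: "gG (gw F (Suc n)) (m*y) = measure_pmf.expectation (gw F n) (\<lambda>k. qq F k (m*y))"
  by (simp add: gG_def qq_def prob_bind_pmf)

lemma induct_main:
  "n \<ge> 1 \<Longrightarrow> \<epsilon> > 0 \<Longrightarrow> eventually (\<lambda>x. \<bar>gG (gw F n) (m^n * x) - AA n x\<bar> \<le> \<epsilon> * AA n x) at_top"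
proof (induction n arbitrary: \<epsilon> rule: dec_induct)
  case base
  have "gG (gw F 1) (m^1 * x) = AA 1 x" for x
    by (simp add: gG_def AA_def tail_def bind_return_pmf map_return_pmf bind_return_pmf')
  then show ?case using base AA_nonneg by simp
next
  case (step n)
  note IH = step.IH
  define G where "G = gw F n"
  define g where "g = gG G"
  define Bf where "Bf = (\<lambda>y. AA n (y / m^n))"
  have mn: "m^n > 0" using m_pos by simp
  have aeq: "eventually (\<lambda>y. \<bar>g y - Bf y\<bar> \<le> e * Bf y) at_top" if e: "e > 0" for e
  proof -
    have fl: "filterlim (\<lambda>y. (1 / m^n) * y) at_top at_top" by (rule fl_mult) (use mn in simp)
    have "eventually (\<lambda>y. \<bar>gG (gw F n) (m^n * ((1/m^n) * y)) - AA n ((1/m^n) * y)\<bar> \<le> e * AA n ((1/m^n) * y)) at_top"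
      by (rule ev_compose[OF fl IH[OF e]])
    then show ?thesis using m_pos by (simp add: g_def G_def Bf_def)
  qed
  have B0: "Bf y \<ge> 0" for y by (simp add: Bf_def AA_nonneg)
  have h1: "eventually (\<lambda>y. gG G (y - y powr be) \<le> (1+\<delta>) * gG G y) at_top" if d: "\<delta> > 0" for \<delta>
  proof -
    have "eventually (\<lambda>y. g (y - y powr be) \<le> (1+\<delta>) * g y) at_top"
    proof (rule transfer_up[where Bf=Bf and \<phi>="\<lambda>y. y - y powr be"])
      show "eventually (\<lambda>y. \<bar>g y - Bf y\<bar> \<le> e * Bf y) at_top" if "e > 0" for e using that by (rule aeq)
      show "Bf y \<ge> 0" for y by (rule B0)
      show "eventually (\<lambda>y. Bf (y - y powr be) \<le> (1+e) * Bf y) at_top" if "e > 0" for e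
        unfolding Bf_def using that by (rule AA_up)
      show "filterlim (\<lambda>y. y - y powr be) at_top at_top" by (rule fl_minus_powr) (use be in simp)
      show "\<delta> > 0" by (rule d)
    qed
    then show ?thesis by (simp add: g_def)
  qed
  have h2: "eventually (\<lambda>y. gG G (y + y powr be) \<ge> (1-\<delta>) * gG G y) at_top" if d: "\<delta> > 0" for \<delta>
  proof -
    have "eventually (\<lambda>y. g (y + y powr be) \<ge> (1-\<delta>) * g y) at_top"
    proof (rule transfer_lo[where Bf=Bf and \<phi>="\<lambda>y. y + y powr be"])
      show "eventually (\<lambda>y. \<bar>g y - Bf y\<bar> \<le> e * Bf y) at_top" if "e > 0" for e using that by (rule aeq)
      show "Bf y \<ge> 0" for y by (rule B0)
      show "eventually (\<lambda>y. Bf (y + y powr be) \<ge> (1-e) * Bf y) at_top" if "e > 0" for e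
        unfolding Bf_def using that by (rule AA_lo)
      show "filterlim (\<lambda>y. y + y powr be) at_top at_top" by (rule fl_plus_powr)
      show "\<delta> > 0" by (rule d)
    qed
    then show ?thesis by (simp add: g_def)
  qed
  have h3: "eventually (\<lambda>y. gG G (y/2) \<le> (3 * CC) * gG G y) at_top"
  proof -
    have "eventually (\<lambda>y. g (y/2) \<le> (3 * CC) * g y) at_top"
    proof (rule transfer_half[where Bf=Bf])
      show "eventually (\<lambda>y. \<bar>g y - Bf y\<bar> \<le> e * Bf y) at_top" if "e > 0" for e using that by (rule aeq)
      show "Bf y \<ge> 0" for y by (rule B0)
      show "Bf (y/2) \<le> CC * Bf y" for y unfolding Bf_def by (rule AA_half)
    qed
    then show ?thesis by (simp add: g_def)
  qed
  have C: "3 * CC \<ge> 0" using CC_ge1 by simp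
  define e1 where "e1 = min 1 (\<epsilon> / 3)"
  have e1: "e1 > 0" "e1 \<le> 1" "3 * e1 \<le> \<epsilon>" using step.prems by (auto simp: e1_def)
  have ms: "eventually (\<lambda>y. \<bar>measure_pmf.expectation G (\<lambda>k. qq F k (m*y)) - (gG G y + m^n * T (m*y))\<bar>
            \<le> e1 * (gG G y + m^n * T (m*y))) at_top"
    by (rule main_step[OF _ _ _ h1 h2 h3 C e1(1)]) (auto simp: G_def int_gw E_gw mn)
  have ms': "eventually (\<lambda>x. \<bar>gG (gw F (Suc n)) (m^Suc n * x) - (gG G (m^n * x) + m^n * T (m^Suc n * x))\<bar>
            \<le> e1 * (gG G (m^n * x) + m^n * T (m^Suc n * x))) at_top"
    using ev_compose[OF fl_mult[OF mn] ms] by (simp add: gG_Suc[symmetric] G_def mult.assoc)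
  show ?case using ms' IH[OF e1(1)]
  proof eventually_elim
    case (elim x)
    let ?a = "gG (gw F (Suc n)) (m^Suc n * x)"
    let ?b = "gG G (m^n * x)"
    let ?b' = "AA n x"
    let ?c = "m^n * T (m^Suc n * x)"
    have c0: "?c \<ge> 0" using mn T_nonneg by simp
    have b'0: "?b' \<ge> 0" by (rule AA_nonneg)
    have A: "\<bar>?a - (?b + ?c)\<bar> \<le> e1 * (?b + ?c)" using elim(1) by simp
    have B: "\<bar>?b - ?b'\<bar> \<le> e1 * ?b'" using elim(2) by (simp add: G_def)
    have "?b \<le> (1 + e1) * ?b'" using B by (simp add: abs_le_iff algebra_simps)
    then have "e1 * ?b \<le> e1 * ((1 + e1) * ?b')" using e1 by (intro mult_left_mono) auto
    also have "\<dots> \<le> e1 * (2 * ?b')" using e1 b'0 by (intro mult_left_mono mult_right_mono) auto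
    finally have Cc: "e1 * ?b \<le> 2 * e1 * ?b'" by simp
    have "\<bar>?a - (?b' + ?c)\<bar> \<le> \<bar>?a - (?b + ?c)\<bar> + \<bar>?b - ?b'\<bar>" by simp
    also have "\<dots> \<le> e1 * ?b + e1 * ?c + e1 * ?b'" using A B by (simp add: algebra_simps)
    also have "\<dots> \<le> 3 * e1 * ?b' + e1 * ?c" using Cc by simp
    also have "\<dots> \<le> 3 * e1 * (?b' + ?c)" using e1 c0 by (simp add: algebra_simps)
    also have "\<dots> \<le> \<epsilon> * (?b' + ?c)" using e1 b'0 c0 by (intro mult_right_mono) auto
    finally show ?case by (simp add: AA_Suc)
  qed
qed

end

theorem lemma6:
  fixes F :: "nat pmf" and \<gamma> :: real and n :: nat
  assumes mean_gt1: "offspring_mean F > 1"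
    and second_moment: "integrable (measure_pmf F) (\<lambda>k. (real k)^2)"
    and dominated: "\<exists>C. \<forall>x. tail F (x / 2) \<le> C * tail F x"
    and gamma: "\<gamma> > 1/2"
    and insensitive: "(\<lambda>x. tail F (x + x powr \<gamma>)) \<sim>[at_top] tail F"
    and n: "n \<ge> 1"
  shows "(\<lambda>x. measure_pmf.prob (gw F n) {k. real k / offspring_mean F ^ n > x})
           \<sim>[at_top]
         (\<lambda>x. \<Sum>i<n. offspring_mean F ^ i * tail F (offspring_mean F ^ (i+1) * x))"
proof -
  interpret gwp F \<gamma> using assms by unfold_locales auto
  have mn: "m^n > 0" using m_pos by simp
  have eq: "measure_pmf.prob (gw F n) {k. real k / m ^ n > x} = gG (gw F n) (m^n * x)" for x
  proof -
    have "{k. real k / m ^ n > x} = {k. real k > m^n * x}" using mn by (auto simp: pos_less_divide_eq mult.commute)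
    then show ?thesis by (simp add: gG_def)
  qed
  have "(\<lambda>x. gG (gw F n) (m^n * x)) \<sim>[at_top] AA n"
    by (rule aeq_imp_asymp[OF induct_main[OF n] AA_pos[OF n]])
  then show ?thesis by (simp add: eq AA_def[abs_def])
qed


end
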